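(* Let $n\ge1$, let $L^n_\epsilon\colon S^n\to\mathcal{P}^n$ be the Lagrangian immersions described in the context (defined for all sufficiently small $\epsilon>0$), and set $\iota_\epsilon=\mathrm{Arg}\circ L^n_\epsilon\colon S^n\to M_{\mathbb{R}}/2\pi M$. Let $q\colon\partial Z_n\to M_{\mathbb{R}}/2\pi M$ be the map $x\mapsto \pi x \bmod 2\pi M$ (i.e. the inclusion of $\partial(\pi Z_n)$). Then there exist homotopy equivalences $p_\epsilon\colon S^n\to\partial Z_n$, defined for all sufficiently small $\epsilon>0$, such that \[\lim_{\epsilon\to0}\|\iota_\epsilon-q\circ p_\epsilon\|_{C^0}=0.\]
   Context: $\widetilde{M}=\mathbb{Z}\langle e_1,\dots,e_{n+2}\rangle$, $M=\widetilde{M}/\langle e_1+\dots+e_{n+2}\rangle$, $M_{\mathbb{R}}=M\otimes\mathbb{R}$; $\mathrm{Arg}\colon\mathbb{CP}^{n+1}\setminus\bigcup_j\{z_j=0\}\to M_{\mathbb{R}}/2\pi M$ is induced by $(z_j)\mapsto(\arg z_j)$; $C^0$-distances are taken with respect to a flat metric on the torus $M_{\mathbb{R}}/2\pi M$. $Z_n=\{\sum_j\theta_je_j:\theta_j\in[0,1]\}\subset M_{\mathbb{R}}$ and $\partial Z_n$ its boundary. $\mathcal{P}^n=\{[z]\in\mathbb{CP}^{n+1}:\sum_jz_j=0,\ z_j\neq0\ \forall j\}$. Construction of $L^n_\epsilon$: $\mathbb{CP}^n:=\{\sum_jz_j=0\}\subset\mathbb{CP}^{n+1}$, $\mathbb{RP}^n$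 its real points, $S^n=\{x\in\mathbb{R}^{n+2}:\sum x_j=0,\sum x_j^2=1\}$ double covering $\mathbb{RP}^n$. Fix an $S_{n+2}\times\mathbb{Z}_2$-equivariant symplectic embedding of a small disk cotangent bundle $D^*_\eta\mathbb{RP}^n$ onto a neighbourhood of $\mathbb{RP}^n$ in $\mathbb{CP}^n$ ($\mathbb{Z}_2$ acting by complex conjugation and by negating covectors), holomorphic along the zero section (with respect to the almost complex structure induced by the round metric), and compose with the double cover to get $i\colon D^*_\eta S^n\to\mathbb{CP}^n$. Fix $0<\delta\ll1$ and a smooth odd $g\colon\mathbb{R}\to\mathbb{R}$ with $g'>0$, $g(x)=x$ for $|x|<\delta$, $g'(x)$ strictly decreasing in $|x|$ for $|x|>\delta$, $g'(x)<\delta$ for $|x|>2\delta$; $f=\sum_j g(x_j)|_{S^n}$. For $\epsilon>0$ small, $L^n_\epsilon=i\circ(\text{graph of }\epsilon\,df)$, a Lagrangian immersion with image in $\mathcal{P}^n$. *)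

theory Defs
  imports "HOL-Analysis.Analysis"
begin

fun Ck_on :: "nat \<Rightarrow> 'a::real_normed_vector set \<Rightarrow> ('a \<Rightarrow> 'b::real_normed_vector) \<Rightarrow> bool" where
  "Ck_on 0 U f = continuous_on U f"
| "Ck_on (Suc k) U f =
     ((\<forall>x\<in>U. f differentiable (at x)) \<and> (\<forall>v. Ck_on k U (\<lambda>x. frechet_derivative f (at x) v)))"

definition smooth_on :: "'a::real_normed_vector set \<Rightarrow> ('a \<Rightarrow> 'b::real_normed_vector) \<Rightarrow> bool" where
  "smooth_on U f \<longleftrightarrow> open U \<and> (\<forall>k. Ck_on k U f)"

definition homotopy_equivalence_map :: "'a topology \<Rightarrow> 'b topology \<Rightarrow> ('a \<Rightarrow> 'b) \<Rightarrow> bool" where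
  "homotopy_equivalence_map X Y f \<longleftrightarrow> continuous_map X Y f \<and>
     (\<exists>g. continuous_map Y X g \<and>
          homotopic_with (\<lambda>x. True) X X (g \<circ> f) id \<and>
          homotopic_with (\<lambda>x. True) Y Y (f \<circ> g) id)"

section \<open>The set-up: index type 'k with CARD('k) = n+2\<close>

definition ones :: "real^'k" where "ones = (\<chi> j. 1)"

definition sphereS :: "(real^'k) set" where
  "sphereS = {x. sum (\<lambda>j. x$j) UNIV = 0 \<and> x \<bullet> x = 1}"

text \<open>Disk cotangent bundle of S^n (covectors identified with tangent vectors by the round metric).\<close>
definition diskT :: "real \<Rightarrow> ((real^'k) \<times> (real^'k)) set" where
  "diskT \<eta> = {(x, \<xi>). x \<in> sphereS \<and> \<xi> \<bullet> x = 0 \<and> sum (\<lambda>j. \<xi>$j) UNIV = 0 \<and> norm \<xi> < \<eta>}"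

definition tangentT :: "(real^'k) \<times> (real^'k) \<Rightarrow> ((real^'k) \<times> (real^'k)) set" where
  "tangentT p = {(a, b). a \<bullet> fst p = 0 \<and> sum (\<lambda>j. a$j) UNIV = 0 \<and> sum (\<lambda>j. b$j) UNIV = 0
                   \<and> b \<bullet> fst p + snd p \<bullet> a = 0}"

text \<open>Canonical symplectic form sum dx_j /\ dxi_j, and the compatible almost complex structure
  induced by the round metric along the zero section (horizontal a to vertical a).\<close>
definition omega_can :: "(real^'k) \<times> (real^'k) \<Rightarrow> (real^'k) \<times> (real^'k) \<Rightarrow> real" where
  "omega_can u v = fst u \<bullet> snd v - snd u \<bullet> fst v"

definition J_can :: "(real^'k) \<times> (real^'k) \<Rightarrow> (real^'k) \<times> (real^'k)" where
  "J_can u = (- snd u, fst u)"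

text \<open>Hermitian product and the Fubini--Study form written on a lift z in C^(n+2) - 0.\<close>
definition hprod :: "complex^'k \<Rightarrow> complex^'k \<Rightarrow> complex" where
  "hprod a b = (\<Sum>j\<in>UNIV. a$j * cnj (b$j))"

definition omega_FS :: "complex^'k \<Rightarrow> complex^'k \<Rightarrow> complex^'k \<Rightarrow> real" where
  "omega_FS z u v =
     Im (hprod v u * hprod z z - hprod v z * hprod z u) / (Re (hprod z z))^2"

text \<open>Equality of points of projective space represented by nonzero lifts.\<close>
definition proj_eq :: "complex^'k \<Rightarrow> complex^'k \<Rightarrow> bool" where
  "proj_eq z w \<longleftrightarrow> z \<noteq> 0 \<and> w \<noteq> 0 \<and> (\<exists>c. c \<noteq> 0 \<and> w = c *s z)"

definition cvec :: "real^'k \<Rightarrow> complex^'k" where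
  "cvec x = (\<chi> j. complex_of_real (x$j))"

definition cconj :: "complex^'k \<Rightarrow> complex^'k" where
  "cconj z = (\<chi> j. cnj (z$j))"

definition permv :: "('k \<Rightarrow> 'k) \<Rightarrow> 'a^'k \<Rightarrow> 'a^'k" where
  "permv \<sigma> v = (\<chi> j. v $ \<sigma> j)"

text \<open>Admissible lifts I : D*_eta S^n -> C^(n+2) - 0 of the map i : D*_eta S^n -> CP^n
  (composite of an S_(n+2) x Z_2-equivariant symplectic embedding of D*_eta RP^n, holomorphic
  along the zero section, with the double cover).\<close>
definition admissible_lift :: "real \<Rightarrow> ((real^'k) \<times> (real^'k) \<Rightarrow> complex^'k) \<Rightarrow> bool" where
  "admissible_lift \<eta> I \<longleftrightarrow> \<eta> > 0 \<and>
     (\<exists>U. diskT \<eta> \<subseteq> U \<and> smooth_on U I) \<and>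
     (\<forall>p\<in>diskT \<eta>. I p \<noteq> 0 \<and> sum (\<lambda>j. I p $ j) UNIV = 0) \<and>
     \<comment> \<open>factors through the double cover, and is injective on D*_eta RP^n\<close>
     (\<forall>x \<xi>. (x, \<xi>) \<in> diskT \<eta> \<longrightarrow> proj_eq (I (x, \<xi>)) (I (- x, - \<xi>))) \<and>
     (\<forall>p\<in>diskT \<eta>. \<forall>q\<in>diskT \<eta>. proj_eq (I p) (I q) \<longrightarrow> q = p \<or> q = - p) \<and>
     \<comment> \<open>image is a neighbourhood (open set) of RP^n in CP^n, zero section goes to RP^n\<close>
     openin (top_of_set {z::complex^'k. sum (\<lambda>j. z$j) UNIV = 0})
        {c *s I p | c p. c \<noteq> 0 \<and> p \<in> diskT \<eta>} \<and>
     (\<forall>x\<in>sphereS. proj_eq (cvec x) (I (x, 0))) \<and>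
     \<comment> \<open>symplectic\<close>
     (\<forall>p\<in>diskT \<eta>. \<forall>u\<in>tangentT p. \<forall>v\<in>tangentT p.
        omega_FS (I p) (frechet_derivative I (at p) u) (frechet_derivative I (at p) v)
          = omega_can u v) \<and>
     \<comment> \<open>holomorphic along the zero section\<close>
     (\<forall>x\<in>sphereS. \<forall>u\<in>tangentT (x, 0).
        frechet_derivative I (at (x, 0)) (J_can u) - \<i> *s frechet_derivative I (at (x, 0)) u
          \<in> {c *s I (x, 0) | c. True}) \<and>
     \<comment> \<open>S_(n+2) x Z_2 equivariance\<close>
     (\<forall>\<sigma> x \<xi>. bij \<sigma> \<longrightarrow> (x, \<xi>) \<in> diskT \<eta> \<longrightarrow>
        proj_eq (permv \<sigma> (I (x, \<xi>))) (I (permv \<sigma> x, permv \<sigma> \<xi>))) \<and>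
     (\<forall>x \<xi>. (x, \<xi>) \<in> diskT \<eta> \<longrightarrow> proj_eq (cconj (I (x, \<xi>))) (I (x, - \<xi>)))"

definition admissible_g :: "real \<Rightarrow> (real \<Rightarrow> real) \<Rightarrow> bool" where
  "admissible_g \<delta> g \<longleftrightarrow> smooth_on UNIV g \<and> (\<forall>x. g (- x) = - g x) \<and>
     (\<forall>x. deriv g x > 0) \<and> (\<forall>x. \<bar>x\<bar> < \<delta> \<longrightarrow> g x = x) \<and>
     (\<forall>x y. \<delta> < \<bar>x\<bar> \<and> \<bar>x\<bar> < \<bar>y\<bar> \<longrightarrow> deriv g y < deriv g x) \<and>
     (\<forall>x. \<bar>x\<bar> > 2 * \<delta> \<longrightarrow> deriv g x < \<delta>)"

text \<open>Gradient (w.r.t. the round metric) of f = sum_j g(x_j) restricted to S^n; this is the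
  covector df under the metric identification.\<close>
definition grad_f :: "(real \<Rightarrow> real) \<Rightarrow> real^'k \<Rightarrow> real^'k" where
  "grad_f g x = (let w = ((\<chi> j. deriv g (x$j)) :: real^'k) in
      w - (w \<bullet> x) *\<^sub>R x - ((w \<bullet> ones) / ((ones::real^'k) \<bullet> ones)) *\<^sub>R ones)"

text \<open>The Lagrangian immersion L_eps, represented by its lift.\<close>
definition Lift_L :: "((real^'k) \<times> (real^'k) \<Rightarrow> complex^'k) \<Rightarrow> (real \<Rightarrow> real) \<Rightarrow> real \<Rightarrow> real^'k \<Rightarrow> complex^'k" where
  "Lift_L I g \<epsilon> x = I (x, \<epsilon> *\<^sub>R grad_f g x)"

text \<open>Arg, with values represented in R^(n+2); the torus M_R / 2 pi M is R^(n+2) modulo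
  2 pi Z^(n+2) + R(1,...,1).\<close>
definition ArgV :: "complex^'k \<Rightarrow> real^'k" where
  "ArgV z = (\<chi> j. Arg (z$j))"

definition tor_dist :: "real^'k \<Rightarrow> real^'k \<Rightarrow> real" where
  "tor_dist a b = Inf {norm (a - b - (2 * pi) *\<^sub>R (\<chi> j. of_int (k j)) - t *\<^sub>R ones) | k t. True}"

text \<open>M_R realised as the hyperplane sum = 0 (orthogonal complement of ones), with projection Pm.\<close>
definition MR :: "(real^'k) set" where
  "MR = {x. sum (\<lambda>j. x$j) UNIV = 0}"

definition Pm :: "real^'k \<Rightarrow> real^'k" where
  "Pm \<theta> = \<theta> - ((\<theta> \<bullet> ones) / ((ones::real^'k) \<bullet> ones)) *\<^sub>R ones"

definition Zn :: "(real^'k) set" where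
  "Zn = Pm ` {\<theta>. \<forall>j. 0 \<le> \<theta>$j \<and> \<theta>$j \<le> 1}"

definition bdZn :: "(real^'k) set" where
  "bdZn = (top_of_set MR) frontier_of Zn"

end

theory Submission
  imports Defs
begin

definition mxv :: "real^'k \<Rightarrow> real" where "mxv y = Max (range (\<lambda>j. y$j))"
definition mnv :: "real^'k \<Rightarrow> real" where "mnv y = Min (range (\<lambda>j. y$j))"
definition spn :: "real^'k \<Rightarrow> real" where "spn y = mxv y - mnv y"

lemma mxv_ge: "y$j \<le> mxv y"
  unfolding mxv_def by (rule Max_ge) auto
lemma mnv_le: "mnv y \<le> y$j"
  unfolding mnv_def by (rule Min_le) auto
lemma mxv_ex: "\<exists>j. mxv y = y$j"
proof -
  have "Max (range (\<lambda>j. y$j)) \<in> range (\<lambda>j. y$j)" by (rule Max_in) auto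
  then show ?thesis unfolding mxv_def by (metis image_iff)
qed
lemma mnv_ex: "\<exists>j. mnv y = y$j"
proof -
  have "Min (range (\<lambda>j. y$j)) \<in> range (\<lambda>j. y$j)" by (rule Min_in) auto
  then show ?thesis unfolding mnv_def by (metis image_iff)
qed
lemma mxv_eqI: "(\<And>j. y$j \<le> M) \<Longrightarrow> y$i = M \<Longrightarrow> mxv y = M"
  using mxv_ge mxv_ex by (metis order_antisym)
lemma mnv_eqI: "(\<And>j. M \<le> y$j) \<Longrightarrow> y$i = M \<Longrightarrow> mnv y = M"
  using mnv_le mnv_ex by (metis order_antisym)

lemma mxv_shift: "mxv (y + c *\<^sub>R (ones::real^'k)) = mxv y + c"
proof -
  obtain i where "mxv y = y$i" using mxv_ex by blast
  then show ?thesis by (intro mxv_eqI[of _ _ i]) (auto simp: ones_def, metis mxv_ge)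
qed
lemma mnv_shift: "mnv (y + c *\<^sub>R (ones::real^'k)) = mnv y + c"
proof -
  obtain i where "mnv y = y$i" using mnv_ex by blast
  then show ?thesis by (intro mnv_eqI[of _ _ i]) (auto simp: ones_def, metis mnv_le)
qed
lemma spn_shift: "spn (y + c *\<^sub>R (ones::real^'k)) = spn y"
  by (simp add: spn_def mxv_shift mnv_shift)

lemma mxv_scale: "c \<ge> 0 \<Longrightarrow> mxv (c *\<^sub>R y) = c * mxv y"
proof -
  assume c: "c \<ge> 0"
  obtain i where "mxv y = y$i" using mxv_ex by blast
  then show ?thesis using c by (intro mxv_eqI[of _ _ i]) (auto, metis mxv_ge mult_left_mono)
qed
lemma mnv_scale: "c \<ge> 0 \<Longrightarrow> mnv (c *\<^sub>R y) = c * mnv y"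
proof -
  assume c: "c \<ge> 0"
  obtain i where "mnv y = y$i" using mnv_ex by blast
  then show ?thesis using c by (intro mnv_eqI[of _ _ i]) (auto, metis mnv_le mult_left_mono)
qed
lemma spn_scale: "c \<ge> 0 \<Longrightarrow> spn (c *\<^sub>R y) = c * spn y"
  by (simp add: spn_def mxv_scale mnv_scale right_diff_distrib)

lemma spn_nonneg: "spn y \<ge> 0"
  using mxv_ge[of y] mnv_le[of y] unfolding spn_def by (metis diff_ge_0_iff_ge order_trans)

lemma spn_ge: "y$i - y$j \<le> spn y"
  using mxv_ge[of y i] mnv_le[of y j] unfolding spn_def by linarith

lemma cont_Max_fin:
  assumes "finite A" "A \<noteq> {}" 
  shows "continuous_on S (\<lambda>y::real^'k. Max ((\<lambda>j. y$j) ` A))"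
  using assms
proof (induction A rule: finite_ne_induct)
  case (singleton x)
  then show ?case by (simp add: continuous_on_component)
next
  case (insert x F)
  have "(\<lambda>y::real^'k. Max ((\<lambda>j. y$j) ` insert x F)) = (\<lambda>y. max (y$x) (Max ((\<lambda>j. y$j) ` F)))"
    using insert by (auto simp: Max_insert)
  then show ?case using insert by (auto intro!: continuous_on_max continuous_on_component)
qed

lemma cont_Min_fin:
  assumes "finite A" "A \<noteq> {}" 
  shows "continuous_on S (\<lambda>y::real^'k. Min ((\<lambda>j. y$j) ` A))"
  using assms
proof (induction A rule: finite_ne_induct)
  case (singleton x)
  then show ?case by (simp add: continuous_on_component)
next
  case (insert x F)
  have "(\<lambda>y::real^'k. Min ((\<lambda>j. y$j) ` insert x F)) = (\<lambda>y. min (y$x) (Min ((\<lambda>j. y$j) ` F)))"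
    using insert by (auto simp: Min_insert)
  then show ?case using insert by (auto intro!: continuous_on_min continuous_on_component)
qed

lemma cont_spn: "continuous_on S (spn::real^'k \<Rightarrow> real)"
proof -
  have c1: "continuous_on S (\<lambda>y::real^'k. Max ((\<lambda>j. y$j) ` UNIV))"
    by (rule cont_Max_fin) auto
  have c2: "continuous_on S (\<lambda>y::real^'k. Min ((\<lambda>j. y$j) ` UNIV))"
    by (rule cont_Min_fin) auto
  show ?thesis unfolding spn_def mxv_def mnv_def
    using continuous_on_diff[OF c1 c2] by simp
qed

lemma inner_ones: "y \<bullet> (ones::real^'k) = sum (\<lambda>j. y$j) UNIV"
  by (simp add: inner_vec_def ones_def)
lemma ones_ones: "(ones::real^'k) \<bullet> ones = real CARD('k)"
  by (simp add: inner_vec_def ones_def)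
lemma sum_scale_ones: "sum (\<lambda>j. (y + c *\<^sub>R (ones::real^'k))$j) UNIV = sum (\<lambda>j. y$j) UNIV + c * real CARD('k)"
  by (simp add: ones_def sum.distrib)

lemma sum_ones: "sum (\<lambda>j. (ones::real^'k)$j) UNIV = real CARD('k)"
  by (simp add: ones_def)

lemma Pm_alt: "Pm \<theta> = \<theta> + (- (sum (\<lambda>j. \<theta>$j) UNIV / real CARD('k))) *\<^sub>R (ones::real^'k)"
proof -
  have "Pm \<theta> = \<theta> - ((\<theta> \<bullet> ones)/((ones::real^'k) \<bullet> ones)) *\<^sub>R (ones::real^'k)" by (simp add: Pm_def)
  then show ?thesis by (simp only: ones_ones inner_ones sum_ones) simp
qed

lemma Pm_MR: "Pm (\<theta>::real^'k) \<in> MR"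
  unfolding MR_def Pm_alt by (simp only: sum_scale_ones mem_Collect_eq) simp

lemma spn_Pm: "spn (Pm \<theta>) = spn \<theta>"
  unfolding Pm_alt by (rule spn_shift)

lemma Pm_MR_id: "y \<in> MR \<Longrightarrow> Pm y = y"
  unfolding Pm_alt MR_def by simp

lemma Pm_shift: "Pm (y + c *\<^sub>R (ones::real^'k)) = Pm y"
proof -
  have "real CARD('k) > 0" by simp
  then have "(sum (\<lambda>j. y$j) UNIV + c * real CARD('k)) / real CARD('k) = sum (\<lambda>j. y$j) UNIV / real CARD('k) + c"
    by (simp add: field_simps)
  then show ?thesis unfolding Pm_alt by (simp only: sum_scale_ones) (simp add: algebra_simps)
qed

lemma Zn_iff: "y \<in> Zn \<longleftrightarrow> y \<in> MR \<and> spn (y::real^'k) \<le> 1"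
proof
  assume "y \<in> Zn"
  then obtain \<theta> where th: "\<forall>j. 0 \<le> \<theta>$j \<and> \<theta>$j \<le> 1" and y: "y = Pm \<theta>" unfolding Zn_def by auto
  have "spn \<theta> \<le> 1"
  proof -
    obtain i where i: "mxv \<theta> = \<theta>$i" using mxv_ex by blast
    obtain j where j: "mnv \<theta> = \<theta>$j" using mnv_ex by blast
    show ?thesis using th[rule_format, of i] th[rule_format, of j] i j unfolding spn_def by linarith
  qed
  then show "y \<in> MR \<and> spn y \<le> 1" using y Pm_MR spn_Pm by metis
next
  assume a: "y \<in> MR \<and> spn y \<le> 1"
  define \<theta> where "\<theta> = y + (- mnv y) *\<^sub>R (ones::real^'k)"
  have "\<forall>j. 0 \<le> \<theta>$j \<and> \<theta>$j \<le> 1"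
  proof
    fix j
    have "\<theta>$j = y$j - mnv y" by (simp add: \<theta>_def ones_def)
    then show "0 \<le> \<theta>$j \<and> \<theta>$j \<le> 1"
      using a mnv_le[of y j] mxv_ge[of y j] unfolding spn_def by linarith
  qed
  moreover have "Pm \<theta> = y" unfolding \<theta>_def Pm_shift using a Pm_MR_id by blast
  ultimately show "y \<in> Zn" unfolding Zn_def by blast
qed

lemma closed_MR: "closed (MR::(real^'k) set)"
  unfolding MR_def by (intro closed_Collect_eq continuous_intros)

lemma closed_Zn: "closed (Zn::(real^'k) set)"
proof -
  have "Zn = MR \<inter> {y::real^'k. spn y \<le> 1}" using Zn_iff by blast
  moreover have "closed {y::real^'k. spn y \<le> 1}"
    by (rule closed_Collect_le[OF cont_spn]) (rule continuous_on_const)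
  ultimately show ?thesis using closed_MR by (metis closed_Int)
qed

lemma bdZn_eq: "bdZn = {y::real^'k. y \<in> MR \<and> spn y = 1}"
proof (intro set_eqI iffI)
  fix y :: "real^'k"
  assume y: "y \<in> bdZn"
  have ZMR: "Zn \<subseteq> (MR::(real^'k) set)" using Zn_iff by blast
  have "top_of_set MR closure_of Zn = (Zn::(real^'k) set)"
    unfolding closure_of_eq closedin_closed using closed_Zn ZMR by blast
  then have yZ: "y \<in> Zn" using y unfolding bdZn_def frontier_of_def by blast
  have "\<not> spn y < 1"
  proof
    assume s: "spn y < 1"
    have op: "open {z::real^'k. spn z < 1}"
      by (rule open_Collect_less[OF cont_spn]) (rule continuous_on_const)
    have "openin (top_of_set MR) ({z::real^'k. spn z < 1} \<inter> MR)"
      using op by (auto simp: openin_open)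
    moreover have "{z::real^'k. spn z < 1} \<inter> MR \<subseteq> Zn" by (auto simp: Zn_iff)
    moreover have "y \<in> {z::real^'k. spn z < 1} \<inter> MR" using s yZ by (simp add: Zn_iff)
    ultimately have "y \<in> top_of_set MR interior_of Zn"
      unfolding interior_of_def by (intro CollectI exI[of _ "{z::real^'k. spn z < 1} \<inter> MR"]) simp
    then show False using y unfolding bdZn_def frontier_of_def by blast
  qed
  then show "y \<in> {y. y \<in> MR \<and> spn y = 1}" using yZ by (simp add: Zn_iff)
next
  fix y :: "real^'k"
  assume "y \<in> {y. y \<in> MR \<and> spn y = 1}"
  then have yM: "y \<in> MR" and s: "spn y = 1" by auto
  then have yZ: "y \<in> Zn" by (simp add: Zn_iff)
  have "y \<in> top_of_set MR closure_of Zn"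
    using yZ by (intro closure_of_subset[THEN subsetD]) (auto simp: Zn_iff)
  moreover have "y \<notin> top_of_set MR interior_of Zn"
  proof
    assume "y \<in> top_of_set MR interior_of Zn"
    then obtain T where T: "openin (top_of_set MR) T" "y \<in> T" "T \<subseteq> Zn"
      unfolding interior_of_def by blast
    then obtain W where W: "open W" "T = W \<inter> MR" by (auto simp: openin_open)
    have yW: "y \<in> W" using T W by auto
    obtain r where r: "r > 0" "ball y r \<subseteq> W" using openE[OF W(1) yW] by metis
    obtain i where i: "mxv y = y$i" using mxv_ex by blast
    obtain j where j: "mnv y = y$j" using mnv_ex by blast
    have ij: "i \<noteq> j" using i j s unfolding spn_def by auto
    define t where "t = r/4"
    define z where "z = y + t *\<^sub>R (axis i 1 - axis j 1)"
    have "norm (t *\<^sub>R (axis i (1::real) - axis j 1)) \<le> t * 2"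
      using r t_def by (simp add: norm_triangle_le_diff)
    then have "dist y z < r" using r unfolding z_def t_def dist_norm by simp
    then have "z \<in> W" using r by auto
    moreover have "z \<in> MR" using yM ij unfolding z_def MR_def
      by (simp add: sum.distrib axis_def sum_subtractf right_diff_distrib sum_distrib_left[symmetric] if_distrib[of "(*) t"] cong: if_cong)
    ultimately have "z \<in> Zn" using W T by auto
    then have "spn z \<le> 1" by (simp add: Zn_iff)
    moreover have "z$i - z$j = 1 + 2*t" using i j ij s unfolding z_def spn_def
      by (simp add: axis_def)
    moreover have "z$i - z$j \<le> spn z" by (rule spn_ge)
    ultimately show False using r t_def by simp
  qed
  ultimately show "y \<in> bdZn" unfolding bdZn_def frontier_of_def by blast
qed

lemma spn_pos: assumes "y \<in> MR" "y \<noteq> (0::real^'k)" shows "spn y > 0"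
proof (rule ccontr)
  assume "\<not> spn y > 0"
  then have e: "mxv y = mnv y" using spn_nonneg[of y] unfolding spn_def by linarith
  have c: "\<And>j. y$j = mnv y" using mxv_ge[of y] mnv_le[of y] e by (metis order_antisym)
  have "sum (\<lambda>j. y$j) UNIV = real CARD('k) * mnv y" by (simp add: c)
  then have "mnv y = 0" using assms(1) unfolding MR_def by simp
  then have "y = 0" using c by (simp add: vec_eq_iff)
  then show False using assms by simp
qed

lemma spn_zero: "spn (0::real^'k) = 0"
  using spn_scale[of 0 "0::real^'k"] by simp

lemma sphereS_iff: "x \<in> sphereS \<longleftrightarrow> x \<in> MR \<and> norm x = 1"
  unfolding sphereS_def MR_def by (auto simp: norm_eq_1)

lemma MR_scale: "y \<in> MR \<Longrightarrow> c *\<^sub>R y \<in> MR"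
  unfolding MR_def by (simp add: sum_distrib_left[symmetric])
lemma MR_add: "y \<in> MR \<Longrightarrow> z \<in> MR \<Longrightarrow> y + z \<in> MR"
  unfolding MR_def by (simp add: sum.distrib)
lemma MR_uminus: "y \<in> MR \<Longrightarrow> - y \<in> MR"
  unfolding MR_def by (simp add: sum_negf)

lemma heq_from_neg:
  assumes pc: "continuous_on sphereS p" and pS: "p ` sphereS \<subseteq> bdZn"
    and neg: "\<forall>x\<in>sphereS. p x \<bullet> x \<le> (0::real)"
  shows "homotopy_equivalence_map (top_of_set (sphereS::(real^'k) set)) (top_of_set bdZn) p"
proof -
  let ?S = "sphereS::(real^'k) set"
  let ?B = "bdZn::(real^'k) set"
  define mu where "mu x = (1 / spn (- x)) *\<^sub>R (- x)" for x :: "real^'k"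
  define nu where "nu y = (- 1 / norm y) *\<^sub>R y" for y :: "real^'k"
  define r where "r y = (1 / spn y) *\<^sub>R y" for y :: "real^'k"
  have spnm: "spn (- x) > 0" if "x \<in> ?S" for x
    using that by (intro spn_pos) (auto simp: sphereS_iff MR_uminus)
  have muB: "mu x \<in> ?B" if "x \<in> ?S" for x
  proof -
    have "spn (mu x) = 1" using spnm[OF that] unfolding mu_def
      by (subst spn_scale) auto
    moreover have "mu x \<in> MR" using that unfolding mu_def by (auto simp: sphereS_iff MR_uminus MR_scale)
    ultimately show ?thesis by (simp add: bdZn_eq)
  qed
  have B0: "y \<noteq> 0" if "y \<in> ?B" for y using that by (auto simp: bdZn_eq spn_zero)
  have nuS: "nu y \<in> ?S" if "y \<in> ?B" for y
    using that B0[OF that] unfolding nu_def by (auto simp: sphereS_iff bdZn_eq MR_scale MR_uminus)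
  have numu: "nu (mu x) = x" if "x \<in> ?S" for x
  proof -
    have n: "norm x = 1" using that by (simp add: sphereS_iff)
    have s: "spn (- x) > 0" using spnm[OF that] .
    show ?thesis unfolding nu_def mu_def using n s by (simp add: field_simps)
  qed
  have munu: "mu (nu y) = y" if "y \<in> ?B" for y
  proof -
    have n: "norm y > 0" using B0[OF that] by simp
    have s: "spn y = 1" using that by (simp add: bdZn_eq)
    have "- nu y = (1 / norm y) *\<^sub>R y" unfolding nu_def by simp
    then have "spn (- nu y) = 1 / norm y" using s n by (simp add: spn_scale)
    then show ?thesis unfolding mu_def using n \<open>- nu y = _\<close> by simp
  qed
  have rB: "r y \<in> ?B" if "y \<in> MR - {0}" for y
  proof -
    have "spn y > 0" using that spn_pos by auto
    then have "spn (r y) = 1" unfolding r_def by (subst spn_scale) auto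
    then show ?thesis using that by (simp add: bdZn_eq r_def MR_scale)
  qed
  have rid: "r y = y" if "y \<in> ?B" for y using that by (simp add: bdZn_eq r_def)
  have spnm': "\<forall>x\<in>?S. spn (- x) \<noteq> 0" using spnm by (metis less_irrefl)
  have cmu: "continuous_on ?S mu"
    unfolding mu_def using spnm'
    by (intro continuous_intros continuous_on_compose2[OF cont_spn[of UNIV]]) auto
  have cnu: "continuous_on ?B nu" unfolding nu_def using B0
    by (intro continuous_intros) auto
  have spz: "\<forall>y::real^'k. y \<in> MR \<and> y \<noteq> 0 \<longrightarrow> spn y \<noteq> 0" using spn_pos by (metis less_irrefl)
  have cr: "continuous_on (MR - {0}) r" unfolding r_def using spz
    by (intro continuous_intros continuous_on_compose2[OF cont_spn[of UNIV]]) auto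
  have "homotopic_with_canon (\<lambda>z. True) ?S (MR - {0}) p mu"
  proof (rule homotopic_with_linear[OF pc cmu])
    fix x assume x: "x \<in> ?S"
    show "closed_segment (p x) (mu x) \<subseteq> MR - {0}"
    proof
      fix z assume "z \<in> closed_segment (p x) (mu x)"
      then obtain u where u: "0 \<le> u" "u \<le> 1" "z = (1 - u) *\<^sub>R p x + u *\<^sub>R mu x"
        unfolding closed_segment_def by auto
      have pB: "p x \<in> ?B" using pS x by auto
      have pM: "p x \<in> MR" using pB by (simp add: bdZn_eq)
      have mM: "mu x \<in> MR" using muB[OF x] by (simp add: bdZn_eq)
      have zM: "z \<in> MR" using u pM mM by (simp add: MR_add MR_scale)
      have "z \<noteq> 0"
      proof (cases "u = 0")
        case True then show ?thesis using u B0[OF pB] by simp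
      next
        case False
        have xx: "x \<bullet> x = 1" using x unfolding sphereS_def by simp
        have "mu x \<bullet> x = - (1 / spn (- x))" unfolding mu_def using xx by simp
        then have "mu x \<bullet> x < 0" using spnm[OF x] by simp
        moreover have "p x \<bullet> x \<le> 0" using neg x by auto
        ultimately have "z \<bullet> x < 0" using u False
          by (simp add: inner_add_left) (smt (verit) mult_nonneg_nonpos mult_pos_neg)
        then show ?thesis by auto
      qed
      then show "z \<in> MR - {0}" using zM by simp
    qed
  qed
  then have h1: "homotopic_with_canon (\<lambda>z. True) ?S ?B (r \<circ> p) (r \<circ> mu)"
    by (rule homotopic_with_compose_continuous_left[OF _ cr]) (use rB in auto)
  have h2: "homotopic_with_canon (\<lambda>z. True) ?S ?B p mu"
    by (rule homotopic_with_eq[OF h1]) (use rid pS muB in auto)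
  have h3: "homotopic_with_canon (\<lambda>z. True) ?S ?S (nu \<circ> p) id"
  proof -
    have "homotopic_with_canon (\<lambda>z. True) ?S ?S (nu \<circ> p) (nu \<circ> mu)"
      by (rule homotopic_with_compose_continuous_left[OF h2 cnu]) (use nuS in auto)
    then show ?thesis by (rule homotopic_with_eq) (use numu in auto)
  qed
  have h4: "homotopic_with_canon (\<lambda>z. True) ?B ?B (p \<circ> nu) id"
  proof -
    have "homotopic_with_canon (\<lambda>z. True) ?B ?B (p \<circ> nu) (mu \<circ> nu)"
      by (rule homotopic_with_compose_continuous_right[OF h2 cnu]) (use nuS in auto)
    then show ?thesis by (rule homotopic_with_eq) (use munu in auto)
  qed
  show ?thesis unfolding homotopy_equivalence_map_def
    using h3 h4 pc pS cnu nuS by (intro conjI exI[of _ nu]) (auto simp: continuous_map_subtopology_eu)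
qed

lemma smooth_Ck1:
  assumes "smooth_on U f"
  shows "\<forall>x\<in>U. f differentiable (at x)" "\<And>v. continuous_on U (\<lambda>x. frechet_derivative f (at x) v)"
    "continuous_on U f"
proof -
  have "Ck_on (Suc 0) U f" "Ck_on 0 U f" using assms unfolding smooth_on_def by blast+
  then show "\<forall>x\<in>U. f differentiable (at x)" "\<And>v. continuous_on U (\<lambda>x. frechet_derivative f (at x) v)"
    "continuous_on U f" by auto
qed

lemma deriv_fd:
  fixes g :: "real \<Rightarrow> real"
  assumes "g differentiable (at x)"
  shows "deriv g x = frechet_derivative g (at x) 1"
proof -
  have d: "(g has_derivative frechet_derivative g (at x)) (at x)"
    using assms frechet_derivative_works by blast
  then have lin: "linear (frechet_derivative g (at x))" using has_derivative_linear by blast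
  have "frechet_derivative g (at x) = (\<lambda>h. (frechet_derivative g (at x) 1) * h)"
  proof
    fix h :: real
    have "frechet_derivative g (at x) (h *\<^sub>R 1) = h *\<^sub>R frechet_derivative g (at x) 1"
      using lin by (rule linear_scale)
    then show "frechet_derivative g (at x) h = frechet_derivative g (at x) 1 * h" by simp
  qed
  then have "(g has_field_derivative (frechet_derivative g (at x) 1)) (at x)"
    using d unfolding has_field_derivative_def by metis
  then show ?thesis by (rule DERIV_imp_deriv)
qed

lemma adm_g_facts:
  assumes ag: "admissible_g \<delta> g" and dpos: "\<delta> > 0"
  shows "continuous_on UNIV (deriv g)" "\<And>x. \<bar>x\<bar> < \<delta> \<Longrightarrow> deriv g x = 1"
    "\<And>x. deriv g x \<le> 1" "\<And>x. deriv g x > 0" "\<And>x. \<bar>x\<bar> > 2*\<delta> \<Longrightarrow> deriv g x < \<delta>"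
proof -
  have sm: "smooth_on UNIV g" using ag unfolding admissible_g_def by blast
  have dif: "\<forall>x. g differentiable (at x)" using smooth_Ck1(1)[OF sm] by blast
  have "deriv g = (\<lambda>x. frechet_derivative g (at x) 1)" using dif deriv_fd by blast
  then show cd: "continuous_on UNIV (deriv g)" using smooth_Ck1(2)[OF sm] by metis
  show one: "deriv g x = 1" if "\<bar>x\<bar> < \<delta>" for x
  proof -
    have "((\<lambda>x. x) has_field_derivative 1) (at x)" by (rule DERIV_ident)
    then have "(g has_field_derivative 1) (at x)"
      by (rule has_field_derivative_transform_within_open[of _ _ _ "{-\<delta><..<\<delta>}"])
         (use that ag in \<open>auto simp: admissible_g_def\<close>)
    then show ?thesis by (rule DERIV_imp_deriv)
  qed
  show "\<And>x. deriv g x > 0" "\<And>x. \<bar>x\<bar> > 2*\<delta> \<Longrightarrow> deriv g x < \<delta>" using ag unfolding admissible_g_def by auto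
  have dd: "deriv g \<delta> = 1"
  proof (rule continuous_constant_on_closure[of "{-\<delta><..<\<delta>}" "deriv g"])
    show "continuous_on (closure {-\<delta><..<\<delta>}) (deriv g)" using cd continuous_on_subset by blast
    show "\<And>x. x \<in> {- \<delta><..<\<delta>} \<Longrightarrow> deriv g x = 1" using one by auto
    show "\<delta> \<in> closure {- \<delta><..<\<delta>}" using dpos by simp
  qed
  show "deriv g y \<le> 1" for y
  proof (rule ccontr)
    assume c: "\<not> deriv g y \<le> 1"
    then have yd: "\<bar>y\<bar> \<ge> \<delta>" using one[of y] by linarith
    have "isCont (deriv g) \<delta>" using cd by (simp add: continuous_on_eq_continuous_at)
    then obtain d where d: "d > 0" "\<And>x. \<bar>x - \<delta>\<bar> < d \<Longrightarrow> \<bar>deriv g x - deriv g \<delta>\<bar> < deriv g y - 1"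
      using c unfolding continuous_at_eps_delta dist_real_def
      by (metis diff_gt_0_iff_gt not_le)
    show False
    proof (cases "\<bar>y\<bar> = \<delta>")
      case True
      have "deriv g y = deriv g \<delta>"
      proof (cases "y = \<delta>")
        case False
        then have "y = - \<delta>" using True by auto
        moreover have "deriv g (- \<delta>) = deriv g \<delta>"
        proof -
          have gd: "(g has_real_derivative deriv g (-\<delta>)) (at (- \<delta>))"
            using dif DERIV_deriv_iff_real_differentiable by blast
          have "((\<lambda>x. g (- x)) has_real_derivative (deriv g (- \<delta>) * (-1))) (at \<delta>)"
            by (rule DERIV_chain2[where g="\<lambda>x. - x" and x=\<delta>, OF gd[simplified]]) (auto intro!: derivative_eq_intros)
          then have "((\<lambda>x. - g (- x)) has_field_derivative (deriv g (- \<delta>))) (at \<delta>)"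
            using DERIV_minus by fastforce
          moreover have "(\<lambda>x. - g (- x)) = g" using ag unfolding admissible_g_def by auto
          ultimately show ?thesis using DERIV_imp_deriv by metis
        qed
        ultimately show ?thesis by simp
      qed simp
      then show False using c dd by simp
    next
      case False
      obtain mm where m: "0 < mm" "mm \<le> \<bar>y\<bar> - \<delta>" "mm \<le> d"
        using False yd d by (intro that[of "min d (\<bar>y\<bar> - \<delta>)"]) auto
      define x where "x = \<delta> + mm / 2"
      have x1: "\<delta> < \<bar>x\<bar>" "\<bar>x\<bar> < \<bar>y\<bar>" using m dpos unfolding x_def by auto
      have "deriv g y < deriv g x" using ag x1 unfolding admissible_g_def by blast
      moreover have "\<bar>x - \<delta>\<bar> < d" using m d unfolding x_def by auto
      ultimately show False using d(2)[of x] dd by auto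
    qed
  qed
qed

lemma sphereS_compact: "compact (sphereS::(real^'k) set)"
proof -
  have "sphereS = MR \<inter> sphere (0::real^'k) 1" by (auto simp: sphereS_iff)
  then show ?thesis using closed_MR by (metis compact_Int_closed compact_sphere inf_commute)
qed

lemma sphereS_comp: "x \<in> sphereS \<Longrightarrow> \<bar>x$j\<bar> \<le> 1"
  using component_le_norm_cart[of x j] by (simp add: sphereS_iff)

lemma sphereS_sum: "x \<in> sphereS \<Longrightarrow> sum (\<lambda>j. x$j) UNIV = 0"
  by (simp add: sphereS_def)
lemma sphereS_xx: "x \<in> sphereS \<Longrightarrow> x \<bullet> x = 1"
  by (simp add: sphereS_def)

lemma sphereS_pos_coord:
  assumes x: "x \<in> (sphereS::(real^'k) set)"
  shows "\<exists>j. x$j \<ge> 1 / (2 * real CARD('k))"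
proof (rule ccontr)
  assume "\<not> ?thesis"
  then have lt: "\<And>j. x$j < 1 / (2 * real CARD('k))" by (metis not_le)
  have "1 = (\<Sum>j\<in>UNIV. x$j * x$j)" using sphereS_xx[OF x] by (simp add: inner_vec_def)
  also have "\<dots> \<le> (\<Sum>j\<in>UNIV. \<bar>x$j\<bar>)"
  proof (rule sum_mono)
    fix j
    have "\<bar>x$j\<bar> \<le> 1" using sphereS_comp[OF x] .
    then have "\<bar>x$j\<bar> * \<bar>x$j\<bar> \<le> \<bar>x$j\<bar>" by (metis mult_left_le abs_ge_zero)
    moreover have "x$j * x$j = \<bar>x$j\<bar> * \<bar>x$j\<bar>" by (simp add: abs_mult_self_eq)
    ultimately show "x$j * x$j \<le> \<bar>x$j\<bar>" by linarith
  qed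
  finally have s1: "1 \<le> (\<Sum>j\<in>UNIV. \<bar>x$j\<bar>)" .
  have "(\<Sum>j\<in>UNIV. max (x$j) 0) = ((\<Sum>j\<in>UNIV. \<bar>x$j\<bar>) + (\<Sum>j\<in>UNIV. x$j)) / 2"
  proof -
    have "\<And>j. max (x$j) 0 = (\<bar>x$j\<bar> + x$j) / 2" by auto
    then have "(\<Sum>j\<in>UNIV. max (x$j) 0) = (\<Sum>j\<in>UNIV. (\<bar>x$j\<bar> + x$j) / 2)" by (intro sum.cong) auto
    also have "\<dots> = ((\<Sum>j\<in>UNIV. \<bar>x$j\<bar>) + (\<Sum>j\<in>UNIV. x$j)) / 2"
      by (simp only: sum_divide_distrib[symmetric] sum.distrib)
    finally show ?thesis .
  qed
  then have s2: "(\<Sum>j\<in>UNIV. max (x$j) 0) \<ge> 1/2" using s1 sphereS_sum[OF x] by simp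
  have "(\<Sum>j\<in>UNIV. max (x$j) 0) < (\<Sum>j\<in>(UNIV::'k set). 1 / (2 * real CARD('k)))"
    by (rule sum_strict_mono) (use lt in auto)
  also have "\<dots> = 1/2" by simp
  finally show False using s2 by simp
qed

lemma sphereS_neg_coord:
  assumes x: "x \<in> (sphereS::(real^'k) set)"
  shows "\<exists>j. x$j \<le> - (1 / (2 * real CARD('k)))"
proof -
  have "- x \<in> sphereS" using x by (auto simp: sphereS_iff MR_uminus)
  then obtain j where "(-x)$j \<ge> 1 / (2 * real CARD('k))" using sphereS_pos_coord by blast
  then have "x$j \<le> - (1 / (2 * real CARD('k)))" by simp
  then show ?thesis by blast
qed

definition wv :: "(real \<Rightarrow> real) \<Rightarrow> real^'k \<Rightarrow> real^'k" where
  "wv g x = (\<chi> j. deriv g (x$j))"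

lemma grad_alt: "grad_f g (x::real^'k) = wv g x - (wv g x \<bullet> x) *\<^sub>R x - ((sum (\<lambda>j. wv g x $ j) UNIV) / real CARD('k)) *\<^sub>R ones"
  unfolding grad_f_def wv_def Let_def by (simp only: ones_ones inner_ones sum_ones)

lemma grad_comp: "(grad_f g (x::real^'k))$j = deriv g (x$j) - (wv g x \<bullet> x) * x$j - (sum (\<lambda>i. deriv g (x$i)) UNIV) / real CARD('k)"
  unfolding grad_alt by (simp add: wv_def ones_def)

lemma grad_cont: "continuous_on UNIV (deriv g) \<Longrightarrow> continuous_on UNIV (grad_f g :: real^'k \<Rightarrow> real^'k)"
proof -
  assume c: "continuous_on UNIV (deriv g)"
  have cw: "continuous_on UNIV (wv g :: real^'k \<Rightarrow> real^'k)"
  proof -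
    have "continuous_on UNIV (\<lambda>x::real^'k. deriv g (x$i))" for i
      using continuous_on_compose2[OF c continuous_on_component[OF continuous_on_id, of UNIV i]] by simp
    then have "continuous_on UNIV (\<lambda>x::real^'k. \<chi> i. deriv g (x$i))"
      by (rule continuous_on_vec_lambda)
    then show ?thesis unfolding wv_def[abs_def] .
  qed
  have cs: "continuous_on UNIV (\<lambda>x::real^'k. sum (\<lambda>j. wv g x $ j) UNIV :: real)"
    by (intro continuous_on_sum) (rule continuous_on_component[OF cw])
  have "continuous_on UNIV (\<lambda>x::real^'k. wv g x - (wv g x \<bullet> x) *\<^sub>R x - ((sum (\<lambda>j. wv g x $ j) UNIV) / real CARD('k)) *\<^sub>R ones)"
    by (intro continuous_on_diff continuous_on_scaleR continuous_on_inner cw continuous_on_id continuous_on_divide cs continuous_on_const) auto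
  then show ?thesis unfolding grad_alt[abs_def] .
qed

lemma grad_perp: "(x::real^'k) \<in> sphereS \<Longrightarrow> grad_f g x \<bullet> x = 0"
proof -
  assume x: "x \<in> sphereS"
  have b: "ones \<bullet> x = 0" using inner_ones[of x] sphereS_sum[OF x] by (metis inner_commute)
  show ?thesis unfolding grad_alt inner_diff_left inner_scaleR_left b sphereS_xx[OF x] by simp
qed

lemma grad_sum: "(x::real^'k) \<in> sphereS \<Longrightarrow> sum (\<lambda>j. grad_f g x $ j) UNIV = 0"
proof -
  assume x: "x \<in> sphereS"
  have "sum (\<lambda>j. grad_f g x $ j) UNIV = grad_f g x \<bullet> ones" by (simp add: inner_ones)
  also have "\<dots> = 0"
  proof -
    have a: "wv g x \<bullet> ones = sum (\<lambda>j. wv g x $ j) UNIV" by (rule inner_ones)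
    have b: "x \<bullet> ones = 0" using inner_ones[of x] sphereS_sum[OF x] by simp
    show ?thesis unfolding grad_alt inner_diff_left inner_scaleR_left a b ones_ones by simp
  qed
  finally show ?thesis .
qed

lemma grad_lower:
  assumes ag: "admissible_g \<delta> g" and d0: "0 < \<delta>" and d1: "\<delta> < 1 / (4 * real CARD('k))"
    and x: "x \<in> (sphereS::(real^'k) set)" and xj: "\<bar>x$j\<bar> < \<delta>"
  shows "(grad_f g x)$j \<ge> 3 / (4 * real CARD('k)) - real CARD('k) * \<bar>x$j\<bar>"
proof -
  let ?K = "real CARD('k)"
  have K1: "?K \<ge> 1" by simp
  note gf = adm_g_facts[OF ag d0]
  have w1: "\<bar>wv g x \<bullet> x\<bar> \<le> ?K"
  proof -
    have "\<bar>wv g x \<bullet> x\<bar> \<le> (\<Sum>i\<in>UNIV. \<bar>deriv g (x$i) * x$i\<bar>)"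
      unfolding inner_vec_def wv_def by (simp add: sum_abs)
    also have "\<dots> \<le> (\<Sum>i\<in>(UNIV::'k set). 1)"
    proof (rule sum_mono)
      fix i
      have "\<bar>deriv g (x$i)\<bar> \<le> 1" using gf(3)[of "x$i"] gf(4)[of "x$i"] by simp
      then show "\<bar>deriv g (x$i) * x$i\<bar> \<le> 1"
        using sphereS_comp[OF x, of i] by (simp add: abs_mult mult_le_one)
    qed
    finally show ?thesis by simp
  qed
  obtain jp where jp: "x$jp \<ge> 1 / (2 * ?K)" using sphereS_pos_coord[OF x] by blast
  have "2 * \<delta> < 1 / (2 * ?K)" using d1 by (simp add: field_simps)
  then have "\<bar>x$jp\<bar> > 2 * \<delta>" using jp by linarith
  then have wjp: "deriv g (x$jp) < \<delta>" using gf(5) by blast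
  have "(\<Sum>i\<in>UNIV. deriv g (x$i)) = deriv g (x$jp) + (\<Sum>i\<in>UNIV - {jp}. deriv g (x$i))"
    by (simp add: sum.remove)
  also have "\<dots> \<le> \<delta> + (\<Sum>i\<in>(UNIV::'k set) - {jp}. 1)"
    using wjp by (intro add_mono sum_mono) (auto simp: gf(3) less_imp_le)
  also have "\<dots> = \<delta> + (?K - 1)" by (simp add: card_Diff_singleton)
  finally have sw: "(\<Sum>i\<in>UNIV. deriv g (x$i)) \<le> \<delta> + (?K - 1)" .
  have "(wv g x \<bullet> x) * x$j \<le> \<bar>wv g x \<bullet> x\<bar> * \<bar>x$j\<bar>" using abs_ge_self[of "(wv g x \<bullet> x) * x$j"] by (simp add: abs_mult)
  also have "\<dots> \<le> ?K * \<bar>x$j\<bar>" by (rule mult_right_mono[OF w1]) simp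
  finally have f1: "(wv g x \<bullet> x) * x$j \<le> ?K * \<bar>x$j\<bar>" .
  have f2: "(\<Sum>i\<in>UNIV. deriv g (x$i)) / ?K \<le> (\<delta> + (?K - 1)) / ?K"
    using sw K1 by (simp add: divide_right_mono)
  have f3: "(\<delta> + (?K - 1)) / ?K \<le> 1 - 3 / (4 * ?K)"
  proof -
    have "1 / (4 * ?K) \<le> 1 / 4" using K1 by (simp add: field_simps)
    then have "\<delta> \<le> 1/4" using d1 by linarith
    then show ?thesis using K1 by (simp add: field_simps)
  qed
  have f4: "deriv g (x$j) = 1" using gf(2) xj by blast
  have "(grad_f g x)$j = 1 - (wv g x \<bullet> x) * x$j - (\<Sum>i\<in>UNIV. deriv g (x$i)) / ?K"
    unfolding grad_comp f4 ..
  then show ?thesis using f1 f2 f3 by linarith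
qed

lemma Arg_cos_sin: assumes "z \<noteq> 0"
  shows "cmod z * cos (Arg z) = Re z" "cmod z * sin (Arg z) = Im z"
proof -
  show "cmod z * cos (Arg z) = Re z"
    using assms Arg_eq [of z] by (metis Re_exp exp_Ln norm_exp_eq_Re Arg_def)
  show "cmod z * sin (Arg z) = Im z"
    using assms Arg_eq [of z] by (metis Im_exp exp_Ln norm_exp_eq_Re Arg_def)
qed

lemma abs_Arg_arccos: assumes "z \<noteq> 0" shows "\<bar>Arg z\<bar> = arccos (Re z / cmod z)"
proof -
  have "cos (Arg z) = Re z / cmod z" using Arg_cos_sin(1)[OF assms] assms by (simp add: field_simps)
  moreover have "\<bar>Arg z\<bar> \<le> pi" using mpi_less_Arg[of z] Arg_le_pi[of z] by auto
  ultimately show ?thesis using arccos_cos_eq_abs by metis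
qed

lemma abs_arctan_le: "\<bar>arctan y\<bar> \<le> \<bar>y\<bar>"
proof -
  have pos: "arctan y \<le> y" if "y > 0" for y :: real
  proof -
    have "\<exists>z. 0 < z \<and> z < y \<and> arctan y - arctan 0 = (y - 0) * inverse (1 + z\<^sup>2)"
      by (rule MVT2) (use that DERIV_arctan in auto)
    then obtain z where "arctan y = y * inverse (1 + z\<^sup>2)" by auto
    moreover have "inverse (1 + z\<^sup>2) \<le> inverse 1" by (rule le_imp_inverse_le) simp_all
    ultimately show ?thesis using that by (simp add: mult_left_le)
  qed
  show ?thesis
  proof (cases "y > 0")
    case True then show ?thesis using pos[of y] by simp
  next
    case False
    show ?thesis
    proof (cases "y = 0")
      case False
      then have "-y > 0" using \<open>\<not> y > 0\<close> by simp
      then show ?thesis using pos[of "-y"] by (simp add: arctan_minus)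
    qed simp
  qed
qed

lemma Arg_Re_pos_bound: assumes "Re w > 0" shows "\<bar>Arg w\<bar> \<le> \<bar>Im w\<bar> / Re w"
proof -
  have w0: "w \<noteq> 0" using assms by auto
  have b: "\<bar>Arg w\<bar> < pi/2" using assms Arg_Re_pos by auto
  have c: "cos (Arg w) > 0" using b by (simp add: cos_gt_zero_pi abs_less_iff)
  have "Im w / Re w = (cmod w * sin (Arg w)) / (cmod w * cos (Arg w))" using Arg_cos_sin[OF w0] by simp
  also have "\<dots> = tan (Arg w)" using w0 by (simp add: tan_def)
  finally have "tan (Arg w) = Im w / Re w" by simp
  then have "Arg w = arctan (Im w / Re w)" using b arctan_tan[of "Arg w"] by (auto simp: abs_less_iff)
  then show ?thesis using abs_arctan_le[of "Im w / Re w"] assms by simp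
qed

lemma Arg_minus_cases: assumes "w \<noteq> 0" shows "Arg w = Arg (- w) + pi \<or> Arg w = Arg (- w) - pi"
  using Arg_minus[of "-w"] assms by (auto split: if_splits)

lemma Arg_Re_neg_bound: assumes "Re w < 0" shows "\<bar>Arg w\<bar> \<ge> pi - \<bar>Im w\<bar> / \<bar>Re w\<bar>"
proof -
  have w0: "w \<noteq> 0" using assms by auto
  have "\<bar>Arg (-w)\<bar> \<le> \<bar>Im w\<bar> / \<bar>Re w\<bar>" using Arg_Re_pos_bound[of "-w"] assms by simp
  then show ?thesis using Arg_minus_cases[OF w0] by auto
qed

lemma Arg_abs_err:
  assumes w0: "w \<noteq> 0" and r: "\<rho> \<ge> 0" and h: "Im w \<ge> 0 \<or> \<bar>Im w\<bar> \<le> \<rho> * \<bar>Re w\<bar>"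
  shows "\<exists>k::int. \<bar>Arg w - \<bar>Arg w\<bar> - 2 * pi * k\<bar> \<le> 2 * \<rho>"
proof (cases "Im w \<ge> 0")
  case True
  then have "Arg w \<ge> 0" using Arg_less_0 by blast
  then show ?thesis using r by (intro exI[of _ 0]) simp
next
  case False
  then have im: "\<bar>Im w\<bar> \<le> \<rho> * \<bar>Re w\<bar>" "Im w < 0" using h by auto
  have neg: "Arg w < 0" using im Arg_neg_iff by blast
  have re0: "Re w \<noteq> 0" using im by auto
  show ?thesis
  proof (cases "Re w > 0")
    case True
    have "\<bar>Arg w\<bar> \<le> \<bar>Im w\<bar> / Re w" by (rule Arg_Re_pos_bound[OF True])
    also have "\<dots> \<le> \<rho>" using im True by (simp only: pos_divide_le_eq[OF True])
    finally show ?thesis using neg by (intro exI[of _ 0]) simp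
  next
    case False
    then have rn: "Re (-w) > 0" using re0 by simp
    have "\<bar>Arg (-w)\<bar> \<le> \<bar>Im (-w)\<bar> / Re (-w)" by (rule Arg_Re_pos_bound[OF rn])
    also have "\<dots> \<le> \<rho>" using im rn by (simp only: pos_divide_le_eq[OF rn]) (simp add: mult.commute)
    finally have a: "\<bar>Arg (-w)\<bar> \<le> \<rho>" .
    have "Arg (-w) > 0" using im Arg_pos_iff[of "-w"] by simp
    then have "Arg w = Arg (-w) - pi" using Arg_minus[of "-w"] w0 by simp
    then show ?thesis using a neg by (intro exI[of _ "-1"]) simp
  qed
qed

lemma Arg_mult_mod: assumes "z \<noteq> 0" "w \<noteq> 0" shows "\<exists>k::int. Arg (z * w) = Arg z + Arg w + 2 * pi * k"
proof -
  have "Arg (z * w) = Arg z + Arg w + (if Arg z + Arg w \<in> {-pi<..pi} then 0 else if Arg z + Arg w > pi then -2*pi else 2*pi)"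
    using Arg_times'[OF assms] by simp
  then show ?thesis
    by (cases "Arg z + Arg w \<in> {-pi<..pi}"; cases "Arg z + Arg w > pi")
       (auto intro: exI[of _ 0] exI[of _ "-1"] exI[of _ 1])
qed

lemma cR: "r *\<^sub>R (z::complex) = complex_of_real r * z"
  by (rule scaleR_conv_of_real)

lemma sR_nth: "(r *\<^sub>R (v::complex^'k))$i = complex_of_real r * v$i"
  by (simp only: vector_scaleR_component) (simp add: scaleR_conv_of_real)

lemma cvec_add: "cvec (a + b) = cvec a + cvec (b::real^'k)"
  by (simp add: cvec_def vec_eq_iff)
lemma cvec_diff: "cvec (a - b) = cvec a - cvec (b::real^'k)"
  by (simp add: cvec_def vec_eq_iff)
lemma cvec_scaleR: "cvec (r *\<^sub>R a) = r *\<^sub>R cvec (a::real^'k)"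
  unfolding vec_eq_iff by (simp add: cvec_def sR_nth cR)
lemma cvec_zero: "cvec (0::real^'k) = 0"
  by (simp add: cvec_def vec_eq_iff)
lemma cvec_nth: "cvec a $ j = complex_of_real (a $ j)"
  by (simp add: cvec_def)
lemma norm_cvec: "norm (cvec (a::real^'k)) = norm a"
  by (simp add: norm_vec_def cvec_def)

lemma hprod_add: "hprod (a + b) c = hprod a c + hprod b c"
  by (simp add: hprod_def sum.distrib distrib_right)
lemma hprod_diff: "hprod (a - b) c = hprod a c - hprod b c"
  by (simp add: hprod_def sum_subtractf left_diff_distrib)
lemma hprod_smult: "hprod (r *s a) c = r * hprod a c"
  by (simp add: hprod_def sum_distrib_left mult.assoc)
lemma hprod_scaleR: "hprod (r *\<^sub>R a) c = complex_of_real r * hprod a c"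
  unfolding hprod_def sR_nth by (simp add: sum_distrib_left mult.assoc)
lemma hprod_zero: "hprod 0 c = 0"
  by (simp add: hprod_def)
lemma hprod_cvec: "hprod (cvec y) (cvec x) = complex_of_real (y \<bullet> (x::real^'k))"
  by (simp add: hprod_def cvec_def inner_vec_def)

lemma smult_add: "c *s (a + b) = c *s a + c *s (b::complex^'k)"
  by (simp add: vec_eq_iff distrib_left)
lemma smult_diff: "c *s (a - b) = c *s a - c *s (b::complex^'k)"
  by (simp add: vec_eq_iff right_diff_distrib)
lemma smult_smult: "c *s (d *s a) = (c * d) *s (a::complex^'k)"
  by (simp add: vec_eq_iff mult.assoc)
lemma smult_scaleR: "c *s (r *\<^sub>R a) = r *\<^sub>R (c *s (a::complex^'k))"
  unfolding vec_eq_iff by (simp add: sR_nth mult.left_commute)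
lemma add_smult: "(c + d) *s a = c *s a + d *s (a::complex^'k)"
  by (simp add: vec_eq_iff distrib_right)

definition Qp :: "real^'k \<Rightarrow> complex^'k \<Rightarrow> complex^'k" where
  "Qp x v = v - hprod v (cvec x) *s cvec x"

lemma Qp_add: "Qp x (a + b) = Qp x a + Qp x b"
  by (simp add: Qp_def hprod_add add_smult)
lemma Qp_diff: "Qp x (a - b) = Qp x a - Qp x b"
  by (simp add: Qp_def hprod_diff vec_eq_iff left_diff_distrib)
lemma Qp_smult: "Qp x (c *s a) = c *s Qp x a"
  by (simp add: Qp_def hprod_smult smult_diff smult_smult)
lemma Qp_scaleR: "Qp x (r *\<^sub>R a) = r *\<^sub>R Qp x a"
  unfolding Qp_def vec_eq_iff by (simp add: hprod_scaleR sR_nth algebra_simps cR)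
lemma Qp_cvec: "Qp x (cvec y) = cvec (y - (y \<bullet> x) *\<^sub>R (x::real^'k))"
  unfolding Qp_def vec_eq_iff by (simp add: hprod_cvec cvec_nth)
lemma Qp_decomp: "v = Qp x v + hprod v (cvec x) *s cvec x"
  by (simp add: Qp_def)
lemma bl_Qp: "bounded_linear (Qp (x::real^'k))"
proof -
  have "Qp x = (\<lambda>v. v - (\<Sum>j\<in>UNIV. v$j * cnj (cvec x $ j)) *s cvec x)"
    by (simp add: Qp_def[abs_def] hprod_def)
  moreover have "linear (\<lambda>v. v - (\<Sum>j\<in>UNIV. v$j * cnj (cvec x $ j)) *s (cvec x :: complex^'k))"
    by (rule linearI) (simp_all add: vec_eq_iff sR_nth algebra_simps sum.distrib sum_distrib_left cR)
  ultimately show ?thesis by (simp add: linear_conv_bounded_linear)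
qed

lemma linear_expand:
  fixes f :: "'a::euclidean_space \<Rightarrow> 'b::real_vector"
  assumes "linear f"
  shows "f v = (\<Sum>b\<in>Basis. (v \<bullet> b) *\<^sub>R f b)"
proof -
  have "f v = f (\<Sum>b\<in>Basis. (v \<bullet> b) *\<^sub>R b)" by (simp add: euclidean_representation)
  also have "\<dots> = (\<Sum>b\<in>Basis. (v \<bullet> b) *\<^sub>R f b)"
    using assms by (simp add: linear_sum linear_scale)
  finally show ?thesis .
qed

lemma deriv_t_phi:
  fixes \<phi> :: "real \<Rightarrow> 'b::real_normed_vector"
  assumes "isCont \<phi> 0"
  shows "((\<lambda>t. t *\<^sub>R \<phi> t) has_derivative (\<lambda>s. s *\<^sub>R \<phi> 0)) (at 0)"
  unfolding has_derivative_at_within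
proof
  show "bounded_linear (\<lambda>s. s *\<^sub>R \<phi> 0)" by (rule bounded_linear_scaleR_left)
  have l: "((\<lambda>y. norm (\<phi> y - \<phi> 0)) \<longlongrightarrow> 0) (at 0)"
    using assms by (simp add: isCont_def LIM_zero_iff tendsto_norm_zero)
  show "((\<lambda>y. (y *\<^sub>R \<phi> y - 0 *\<^sub>R \<phi> 0 - (y - 0) *\<^sub>R \<phi> 0) /\<^sub>R norm (y - 0)) \<longlongrightarrow> 0) (at 0)"
  proof (rule Lim_null_comparison[OF _ l])
    show "\<forall>\<^sub>F y in at 0. norm ((y *\<^sub>R \<phi> y - 0 *\<^sub>R \<phi> 0 - (y - 0) *\<^sub>R \<phi> 0) /\<^sub>R norm (y - 0)) \<le> norm (\<phi> y - \<phi> 0)"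
    proof (rule always_eventually, rule allI)
      fix y :: real
      have "(y *\<^sub>R \<phi> y - 0 *\<^sub>R \<phi> 0 - (y - 0) *\<^sub>R \<phi> 0) /\<^sub>R norm (y - 0) = (y / \<bar>y\<bar>) *\<^sub>R (\<phi> y - \<phi> 0)"
        by (simp add: scaleR_diff_right divide_inverse mult.commute)
      moreover have "\<bar>y / \<bar>y\<bar>\<bar> \<le> 1" by (cases "y = 0") auto
      ultimately show "norm ((y *\<^sub>R \<phi> y - 0 *\<^sub>R \<phi> 0 - (y - 0) *\<^sub>R \<phi> 0) /\<^sub>R norm (y - 0)) \<le> norm (\<phi> y - \<phi> 0)"
        by (simp add: mult_left_le_one_le)
    qed
  qed
qed

lemma adm_U:
  assumes "admissible_lift \<eta> I"
  obtains U where "open U" "diskT \<eta> \<subseteq> U" "\<And>p. p \<in> U \<Longrightarrow> I differentiable (at p)"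
    "\<And>v. continuous_on U (\<lambda>p. frechet_derivative I (at p) v)" "continuous_on U I"
proof -
  obtain U where U: "diskT \<eta> \<subseteq> U" "smooth_on U I" using assms unfolding admissible_lift_def by blast
  show ?thesis using that[of U] U smooth_Ck1[OF U(2)] by (auto simp: smooth_on_def)
qed

lemma adm_eta: "admissible_lift \<eta> I \<Longrightarrow> \<eta> > 0"
  unfolding admissible_lift_def by blast

lemma adm_zero: "admissible_lift \<eta> I \<Longrightarrow> x \<in> sphereS \<Longrightarrow> proj_eq (cvec x) (I (x, 0))"
  unfolding admissible_lift_def by blast

lemma adm_holo: "admissible_lift \<eta> I \<Longrightarrow> x \<in> sphereS \<Longrightarrow> u \<in> tangentT (x, 0) \<Longrightarrow>
   frechet_derivative I (at (x, 0)) (J_can u) - \<i> *s frechet_derivative I (at (x, 0)) u \<in> {c *s I (x, 0) | c. True}"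
  unfolding admissible_lift_def by blast

definition lam :: "((real^'k) \<times> (real^'k) \<Rightarrow> complex^'k) \<Rightarrow> real^'k \<Rightarrow> complex" where
  "lam I x = hprod (I (x, 0)) (cvec x)"

lemma I_zero:
  assumes "admissible_lift \<eta> I" "x \<in> sphereS"
  shows "I (x, 0) = lam I x *s cvec x" "lam I x \<noteq> 0"
proof -
  obtain c where c: "c \<noteq> 0" "I (x, 0) = c *s cvec x"
    using adm_zero[OF assms] unfolding proj_eq_def by blast
  have "lam I x = c" unfolding lam_def c(2) hprod_smult hprod_cvec using sphereS_xx[OF assms(2)] by simp
  then show "I (x, 0) = lam I x *s cvec x" "lam I x \<noteq> 0" using c by auto
qed

lemma in_diskT: "x \<in> sphereS \<Longrightarrow> \<xi> \<bullet> x = 0 \<Longrightarrow> sum (\<lambda>j. \<xi>$j) UNIV = 0 \<Longrightarrow> norm \<xi> < \<eta> \<Longrightarrow> (x, \<xi>) \<in> diskT \<eta>"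
  unfolding diskT_def by auto

lemma bl_smult: "bounded_linear (\<lambda>c::complex. c *s (v::complex^'k))"
proof -
  have "linear (\<lambda>c::complex. c *s (v::complex^'k))"
    by (rule linearI) (simp_all add: vec_eq_iff sR_nth distrib_right cR)
  then show ?thesis by (simp add: linear_conv_bounded_linear)
qed

lemma bl_cvec: "bounded_linear (cvec :: real^'k \<Rightarrow> complex^'k)"
proof -
  have "linear (cvec :: real^'k \<Rightarrow> complex^'k)"
    by (rule linearI) (simp_all add: cvec_add cvec_scaleR)
  then show ?thesis by (simp add: linear_conv_bounded_linear)
qed

lemma isCont_hprod: "isCont A a \<Longrightarrow> isCont B a \<Longrightarrow> isCont (\<lambda>t. hprod (A t) (B t)) a"
  unfolding hprod_def by (intro continuous_intros isCont_vec_nth isCont_cnj)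

lemma key_Q:
  assumes adm: "admissible_lift \<eta> I" and x: "x \<in> sphereS"
    and xi: "\<xi> \<bullet> x = 0" "sum (\<lambda>j. \<xi>$j) UNIV = 0"
  shows "Qp x (frechet_derivative I (at (x, 0)) (\<xi>, 0)) = lam I x *s cvec \<xi>"
proof -
  obtain U where U: "open U" "diskT \<eta> \<subseteq> U" "\<And>p. p \<in> U \<Longrightarrow> I differentiable (at p)"
    "\<And>v. continuous_on U (\<lambda>p. frechet_derivative I (at p) v)" "continuous_on U I"
    using adm_U[OF adm] by metis
  have p0: "(x, 0) \<in> U" using in_diskT[of x 0 \<eta>] adm_eta[OF adm] U(2) x by auto
  have hd: "(I has_derivative frechet_derivative I (at (x,0))) (at (x,0))"
    using U(3)[OF p0] frechet_derivative_works by blast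
  define q where "q = \<xi> \<bullet> \<xi>"
  define \<gamma> where "\<gamma> t = sqrt (1 - t^2 * q) *\<^sub>R x + t *\<^sub>R \<xi>" for t :: real
  have g0: "\<gamma> 0 = x" by (simp add: \<gamma>_def)
  have gd: "(\<gamma> has_derivative (\<lambda>s. s *\<^sub>R \<xi>)) (at 0)"
    unfolding \<gamma>_def by (auto intro!: derivative_eq_intros)
  have cd: "((\<lambda>t. (\<gamma> t, 0::real^'k)) has_derivative (\<lambda>s. (s *\<^sub>R \<xi>, 0))) (at 0)"
    by (rule has_derivative_Pair[OF gd has_derivative_const])
  have comp: "((\<lambda>t. I (\<gamma> t, 0)) has_derivative (\<lambda>s. frechet_derivative I (at (x,0)) (s *\<^sub>R \<xi>, 0))) (at 0)"
    using diff_chain_at[OF cd, of I] hd g0 by (simp add: o_def)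
  have qd: "((\<lambda>t. Qp x (I (\<gamma> t, 0))) has_derivative (\<lambda>s. Qp x (frechet_derivative I (at (x,0)) (s *\<^sub>R \<xi>, 0)))) (at 0)"
    by (rule bounded_linear.has_derivative[OF bl_Qp comp])
  define \<phi> where "\<phi> t = lam I (\<gamma> t) *s cvec \<xi>" for t
  have gc: "isCont \<gamma> 0" using gd has_derivative_continuous by blast
  have ic: "isCont (\<lambda>t. I (\<gamma> t, 0)) 0" using comp has_derivative_continuous by blast
  have cc: "isCont (\<lambda>t. cvec (\<gamma> t)) 0"
    using bounded_linear.isCont[OF bl_cvec gc] .
  have lc: "isCont (\<lambda>t. lam I (\<gamma> t)) 0" unfolding lam_def by (rule isCont_hprod[OF ic cc])
  have phic: "isCont \<phi> 0" unfolding \<phi>_def using bounded_linear.isCont[OF bl_smult lc] .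
  define d where "d = 1 / (sqrt q + 1)"
  have sq0: "sqrt q \<ge> 0" unfolding q_def by (simp add: real_sqrt_ge_zero)
  then have dpos: "d > 0" unfolding d_def by (simp add: add_nonneg_pos)
  have eqn: "Qp x (I (\<gamma> t, 0)) = t *\<^sub>R \<phi> t" if t: "\<bar>t\<bar> < d" for t
  proof -
    have q0: "q \<ge> 0" unfolding q_def by simp
    have sp: "sqrt q + 1 > 0" using sq0 by linarith
    have "\<bar>t\<bar> * (sqrt q + 1) < 1" using t unfolding d_def by (simp only: pos_less_divide_eq[OF sp])
    then have "\<bar>t\<bar> * sqrt q < 1" using t by (simp add: algebra_simps)
    then have "(\<bar>t\<bar> * sqrt q)^2 < 1" using q0 by (simp add: abs_square_less_1)
    then have tq: "t^2 * q < 1" using q0 by (simp add: power_mult_distrib)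
    have xx: "x \<bullet> x = 1" using sphereS_xx[OF x] .
    have xix: "x \<bullet> \<xi> = 0" using xi by (simp add: inner_commute)
    have sq: "(sqrt (1 - t^2 * q))^2 = 1 - t^2 * q" using tq by simp
    have gS: "\<gamma> t \<in> sphereS"
    proof -
      have "sum (\<lambda>j. \<gamma> t $ j) UNIV = 0" unfolding \<gamma>_def
        using sphereS_sum[OF x] xi by (simp add: sum.distrib sum_distrib_left[symmetric])
      moreover have "\<gamma> t \<bullet> \<gamma> t = 1" unfolding \<gamma>_def
        using tq by (simp add: inner_add_left inner_add_right xx xix xi sq power2_eq_square q_def[symmetric] algebra_simps)
      ultimately show ?thesis unfolding sphereS_def by simp
    qed
    have gx: "\<gamma> t \<bullet> x = sqrt (1 - t^2 * q)" unfolding \<gamma>_def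
      by (simp add: inner_add_left xx xi)
    have "Qp x (I (\<gamma> t, 0)) = lam I (\<gamma> t) *s Qp x (cvec (\<gamma> t))"
      using I_zero(1)[OF adm gS] by (simp add: Qp_smult)
    also have "Qp x (cvec (\<gamma> t)) = cvec (t *\<^sub>R \<xi>)" unfolding Qp_cvec gx
      by (simp add: \<gamma>_def)
    finally show ?thesis unfolding \<phi>_def cvec_scaleR smult_scaleR .
  qed
  have td: "((\<lambda>t. t *\<^sub>R \<phi> t) has_derivative (\<lambda>s. s *\<^sub>R \<phi> 0)) (at 0)" by (rule deriv_t_phi[OF phic])
  have td2: "((\<lambda>t. Qp x (I (\<gamma> t, 0))) has_derivative (\<lambda>s. s *\<^sub>R \<phi> 0)) (at 0)"
    by (rule has_derivative_transform_within[OF td dpos]) (use eqn in \<open>auto simp: dist_real_def\<close>)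
  have "(\<lambda>s. Qp x (frechet_derivative I (at (x,0)) (s *\<^sub>R \<xi>, 0))) = (\<lambda>s. s *\<^sub>R \<phi> 0)"
    by (rule has_derivative_unique[OF qd td2])
  then have "Qp x (frechet_derivative I (at (x,0)) (1 *\<^sub>R \<xi>, 0)) = 1 *\<^sub>R \<phi> 0" by metis
  then show ?thesis unfolding \<phi>_def g0 by simp
qed

lemma key_decomp:
  assumes adm: "admissible_lift \<eta> I" and x: "x \<in> sphereS"
    and xi: "\<xi> \<bullet> x = 0" "sum (\<lambda>j. \<xi>$j) UNIV = 0"
  shows "frechet_derivative I (at (x, 0)) (0, \<xi>) =
     (\<i> * lam I x) *s cvec \<xi> + hprod (frechet_derivative I (at (x, 0)) (0, \<xi>)) (cvec x) *s cvec x"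
proof -
  let ?D = "frechet_derivative I (at (x, 0))"
  have u: "(\<xi>, 0) \<in> tangentT (x, 0)" unfolding tangentT_def using xi by simp
  have "J_can (\<xi>, 0) = (0, \<xi>)" by (simp add: J_can_def)
  then obtain c where c: "?D (0, \<xi>) - \<i> *s ?D (\<xi>, 0) = c *s I (x, 0)"
    using adm_holo[OF adm x u] by auto
  then have e: "?D (0, \<xi>) = \<i> *s ?D (\<xi>, 0) + c *s I (x, 0)" by (simp add: algebra_simps)
  have "Qp x (I (x, 0)) = 0" unfolding I_zero(1)[OF adm x] Qp_smult Qp_cvec sphereS_xx[OF x]
    by (simp add: cvec_zero vec_eq_iff)
  then have "Qp x (?D (0, \<xi>)) = \<i> *s (lam I x *s cvec \<xi>)"
    unfolding e Qp_add Qp_smult key_Q[OF adm x xi] by (simp add: vec_eq_iff)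
  then have "Qp x (?D (0, \<xi>)) = (\<i> * lam I x) *s cvec \<xi>" by (simp add: smult_smult)
  then show ?thesis using Qp_decomp[of "?D (0, \<xi>)" x] by simp
qed

lemma taylor_unif:
  fixes I :: "(real^'k) \<times> (real^'k) \<Rightarrow> complex^'k" and Xf :: "real^'k \<Rightarrow> real^'k"
  assumes adm: "admissible_lift \<eta> I" and cX: "continuous_on UNIV Xf"
    and perp: "\<And>x. x \<in> sphereS \<Longrightarrow> Xf x \<bullet> x = 0"
    and sumz: "\<And>x. x \<in> sphereS \<Longrightarrow> sum (\<lambda>j. Xf x $ j) UNIV = 0"
    and e: "e > 0"
  shows "\<exists>\<epsilon>1>0. (\<exists>B. \<forall>x\<in>sphereS. norm (frechet_derivative I (at (x, 0)) (0, Xf x)) \<le> B) \<and> (\<forall>\<epsilon> x. 0 < \<epsilon> \<and> \<epsilon> < \<epsilon>1 \<and> x \<in> sphereS \<longrightarrow> (x, \<epsilon> *\<^sub>R Xf x) \<in> diskT \<eta> \<and>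
     norm (I (x, \<epsilon> *\<^sub>R Xf x) - I (x, 0) - \<epsilon> *\<^sub>R frechet_derivative I (at (x, 0)) (0, Xf x)) \<le> \<epsilon> * e)"
proof -
  let ?S = "sphereS :: (real^'k) set"
  let ?D = "\<lambda>p. frechet_derivative I (at p)"
  obtain U where U: "open U" "diskT \<eta> \<subseteq> U" "\<And>p. p \<in> U \<Longrightarrow> I differentiable (at p)"
    "\<And>v. continuous_on U (\<lambda>p. frechet_derivative I (at p) v)" "continuous_on U I"
    using adm_U[OF adm] by metis
  have eta: "\<eta> > 0" by (rule adm_eta[OF adm])
  have "bounded (Xf ` ?S)"
    by (rule compact_imp_bounded, rule compact_continuous_image[OF continuous_on_subset[OF cX] sphereS_compact]) simp
  then obtain M where M: "M > 0" "\<And>x. x \<in> ?S \<Longrightarrow> norm (Xf x) \<le> M"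
    unfolding bounded_pos by auto
  define s1 where "s1 = \<eta> / (2 * M)"
  have s1: "s1 > 0" unfolding s1_def using eta M by simp
  have inD: "(x, s *\<^sub>R Xf x) \<in> diskT \<eta>" if "x \<in> ?S" "0 \<le> s" "s \<le> s1" for x s
  proof (rule in_diskT[OF that(1)])
    show "(s *\<^sub>R Xf x) \<bullet> x = 0" using perp[OF that(1)] by simp
    show "sum (\<lambda>j. (s *\<^sub>R Xf x) $ j) UNIV = 0" using sumz[OF that(1)] by (simp add: sum_distrib_left[symmetric])
    have "norm (s *\<^sub>R Xf x) \<le> s1 * M" using that M(2)[OF that(1)] M(1)
      by (simp add: mult_mono)
    also have "\<dots> = \<eta> / 2" unfolding s1_def using M by simp
    finally show "norm (s *\<^sub>R Xf x) < \<eta>" using eta by simp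
  qed
  define K where "K = ?S \<times> {0..s1}"
  have Kc: "compact K" unfolding K_def by (intro compact_Times sphereS_compact compact_Icc)
  define Phi where "Phi = (\<lambda>(x, s). ?D (x, s *\<^sub>R Xf x) (0, Xf x))"
  have lin: "linear (?D p)" if "p \<in> U" for p using linear_frechet_derivative U(3)[OF that] by blast
  have Phi_alt: "Phi z = (\<Sum>b\<in>Basis. ((0, Xf (fst z)) \<bullet> b) *\<^sub>R ?D (fst z, snd z *\<^sub>R Xf (fst z)) b)" if "z \<in> K" for z
  proof -
    obtain x s where z: "z = (x, s)" by force
    have "(x, s *\<^sub>R Xf x) \<in> U" using inD[of x s] that U(2) unfolding K_def z by auto
    then show ?thesis unfolding Phi_def z by (simp add: linear_expand[OF lin])
  qed
  have mapK: "(\<lambda>z. (fst z, snd z *\<^sub>R Xf (fst z))) ` K \<subseteq> U" using inD U(2) unfolding K_def by auto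
  have cmap: "continuous_on K (\<lambda>z. (fst z, snd z *\<^sub>R Xf (fst z)))"
    by (intro continuous_intros continuous_on_compose2[OF cX]) auto
  have cPhi: "continuous_on K Phi"
  proof (rule continuous_on_cong[THEN iffD1, OF refl Phi_alt[symmetric]])
    show "continuous_on K (\<lambda>z. \<Sum>b\<in>Basis. ((0, Xf (fst z)) \<bullet> b) *\<^sub>R ?D (fst z, snd z *\<^sub>R Xf (fst z)) b)"
    proof (intro continuous_on_sum continuous_on_scaleR)
      fix b :: "(real^'k) \<times> (real^'k)"
      show "continuous_on K (\<lambda>z. (0, Xf (fst z)) \<bullet> b)"
        by (intro continuous_intros continuous_on_compose2[OF cX]) auto
      show "continuous_on K (\<lambda>z. ?D (fst z, snd z *\<^sub>R Xf (fst z)) b)"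
        using continuous_on_compose2[OF U(4)[of b] cmap mapK] by simp
    qed
  qed simp
  have "uniformly_continuous_on K Phi" by (rule compact_uniformly_continuous[OF cPhi Kc])
  then obtain d where d: "d > 0" "\<And>a b. a \<in> K \<Longrightarrow> b \<in> K \<Longrightarrow> dist b a < d \<Longrightarrow> dist (Phi b) (Phi a) < e"
    unfolding uniformly_continuous_on_def using e by metis
  define \<epsilon>1 where "\<epsilon>1 = min d s1"
  have "\<epsilon>1 > 0" unfolding \<epsilon>1_def using d s1 by simp
  moreover have "(x, \<epsilon> *\<^sub>R Xf x) \<in> diskT \<eta> \<and>
     norm (I (x, \<epsilon> *\<^sub>R Xf x) - I (x, 0) - \<epsilon> *\<^sub>R ?D (x, 0) (0, Xf x)) \<le> \<epsilon> * e"
    if ep: "0 < \<epsilon>" "\<epsilon> < \<epsilon>1" and x: "x \<in> ?S" for \<epsilon> x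
  proof
    show "(x, \<epsilon> *\<^sub>R Xf x) \<in> diskT \<eta>" using inD[OF x] ep unfolding \<epsilon>1_def by simp
    define D0 where "D0 = ?D (x, 0) (0, Xf x)"
    define psi where "psi t = I (x, t *\<^sub>R Xf x) - t *\<^sub>R D0" for t
    have cpsi: "continuous_on {0..\<epsilon>} psi"
    proof -
      have "continuous_on {0..\<epsilon>} (\<lambda>t. (x, t *\<^sub>R Xf x))" by (intro continuous_intros)
      moreover have "(\<lambda>t. (x, t *\<^sub>R Xf x)) ` {0..\<epsilon>} \<subseteq> U" using inD[OF x] ep U(2) unfolding \<epsilon>1_def by auto
      ultimately have "continuous_on {0..\<epsilon>} (\<lambda>t. I (x, t *\<^sub>R Xf x))"
        using continuous_on_compose2[OF U(5)] by blast
      then show ?thesis unfolding psi_def by (intro continuous_intros)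
    qed
    have dpsi: "(psi has_derivative (\<lambda>h. ?D (x, t *\<^sub>R Xf x) (0, h *\<^sub>R Xf x) - h *\<^sub>R D0)) (at t)"
      if t: "0 < t" "t < \<epsilon>" for t
    proof -
      have pU: "(x, t *\<^sub>R Xf x) \<in> U" using inD[OF x, of t] t ep U(2) unfolding \<epsilon>1_def by auto
      have c1: "((\<lambda>t. (x, t *\<^sub>R Xf x)) has_derivative (\<lambda>h. (0, h *\<^sub>R Xf x))) (at t)"
        by (auto intro!: derivative_eq_intros)
      have c2: "(I has_derivative ?D (x, t *\<^sub>R Xf x)) (at (x, t *\<^sub>R Xf x))"
        using U(3)[OF pU] frechet_derivative_works by blast
      have "((\<lambda>t. I (x, t *\<^sub>R Xf x)) has_derivative (\<lambda>h. ?D (x, t *\<^sub>R Xf x) (0, h *\<^sub>R Xf x))) (at t)"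
        using diff_chain_at[OF c1 c2] by (simp add: o_def)
      then show ?thesis unfolding psi_def by (auto intro!: derivative_eq_intros)
    qed
    obtain t where t: "t \<in> {0<..<\<epsilon>}"
      "norm (psi \<epsilon> - psi 0) \<le> norm (?D (x, t *\<^sub>R Xf x) (0, (\<epsilon> - 0) *\<^sub>R Xf x) - (\<epsilon> - 0) *\<^sub>R D0)"
      using mvt_general[OF ep(1) cpsi dpsi] by auto
    have pU: "(x, t *\<^sub>R Xf x) \<in> U" using inD[OF x, of t] t ep U(2) unfolding \<epsilon>1_def by auto
    have "?D (x, t *\<^sub>R Xf x) (0, \<epsilon> *\<^sub>R Xf x) = \<epsilon> *\<^sub>R ?D (x, t *\<^sub>R Xf x) (0, Xf x)"
      using linear_scale[OF lin[OF pU], of \<epsilon> "(0, Xf x)"] by simp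
    then have "norm (psi \<epsilon> - psi 0) \<le> \<epsilon> * norm (Phi (x, t) - Phi (x, 0))"
      using t(2) ep unfolding Phi_def D0_def by (simp add: scaleR_diff_right[symmetric])
    also have "\<dots> \<le> \<epsilon> * e"
    proof -
      have "(x, t) \<in> K" "(x, 0) \<in> K" using t x ep s1 unfolding K_def \<epsilon>1_def by auto
      moreover have "dist (x, t) (x, 0) < d" using t ep unfolding \<epsilon>1_def by (simp add: dist_Pair_Pair dist_real_def)
      ultimately have "dist (Phi (x, t)) (Phi (x, 0)) < e" using d(2) by blast
      then show ?thesis using ep by (simp add: dist_norm)
    qed
    finally show "norm (I (x, \<epsilon> *\<^sub>R Xf x) - I (x, 0) - \<epsilon> *\<^sub>R ?D (x, 0) (0, Xf x)) \<le> \<epsilon> * e"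
      unfolding psi_def D0_def by (simp add: algebra_simps)
  qed
  moreover have "\<exists>B. \<forall>x\<in>?S. norm (?D (x, 0) (0, Xf x)) \<le> B"
  proof -
    have "bounded (Phi ` K)" by (rule compact_imp_bounded, rule compact_continuous_image[OF cPhi Kc])
    then obtain B where B: "\<And>z. z \<in> K \<Longrightarrow> norm (Phi z) \<le> B" unfolding bounded_iff by auto
    have "norm (?D (x, 0) (0, Xf x)) \<le> B" if "x \<in> ?S" for x
      using B[of "(x, 0)"] that s1 unfolding K_def Phi_def by simp
    then show ?thesis by blast
  qed
  ultimately show ?thesis by blast
qed

lemma coord_facts:
  fixes w :: complex
  assumes wx: "cmod (w - complex_of_real xj) \<le> h" and hk: "h \<le> \<kappa> / 8" and k0: "\<kappa> > 0"
    and small: "\<bar>xj\<bar> \<le> \<kappa> \<Longrightarrow> Im w > 0"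
  shows "w \<noteq> 0"
    "\<exists>k::int. \<bar>Arg w - \<bar>Arg w\<bar> - 2 * pi * k\<bar> \<le> 2 * (2 * h / \<kappa>)"
    "xj > h \<Longrightarrow> \<bar>Arg w\<bar> < pi / 2"
    "xj < - h \<Longrightarrow> \<bar>Arg w\<bar> > pi / 2"
    "xj > \<kappa> \<Longrightarrow> \<bar>Arg w\<bar> \<le> 2 * h / \<kappa>"
    "xj < - \<kappa> \<Longrightarrow> \<bar>Arg w\<bar> \<ge> pi - 2 * h / \<kappa>"
proof -
  have h0: "h \<ge> 0" using wx norm_ge_zero order_trans by blast
  have re: "\<bar>Re w - xj\<bar> \<le> h" using abs_Re_le_cmod[of "w - complex_of_real xj"] wx by simp
  have im: "\<bar>Im w\<bar> \<le> h" using abs_Im_le_cmod[of "w - complex_of_real xj"] wx by simp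
  have big: "\<bar>Re w\<bar> \<ge> \<kappa> / 2 \<and> \<bar>Im w\<bar> \<le> (2 * h / \<kappa>) * \<bar>Re w\<bar>" if "\<bar>xj\<bar> > \<kappa>"
  proof
    show r: "\<bar>Re w\<bar> \<ge> \<kappa> / 2" using that re hk by linarith
    have "(2 * h / \<kappa>) * \<bar>Re w\<bar> \<ge> (2 * h / \<kappa>) * (\<kappa> / 2)"
      using r h0 k0 by (intro mult_left_mono) auto
    also have "(2 * h / \<kappa>) * (\<kappa> / 2) = h" using k0 by simp
    finally show "\<bar>Im w\<bar> \<le> (2 * h / \<kappa>) * \<bar>Re w\<bar>" using im by linarith
  qed
  show w0: "w \<noteq> 0"
  proof (cases "\<bar>xj\<bar> \<le> \<kappa>")
    case True then show ?thesis using small by auto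
  next
    case False then show ?thesis using big k0 by auto
  qed
  show "\<exists>k::int. \<bar>Arg w - \<bar>Arg w\<bar> - 2 * pi * k\<bar> \<le> 2 * (2 * h / \<kappa>)"
  proof (rule Arg_abs_err[OF w0])
    show "0 \<le> 2 * h / \<kappa>" using h0 k0 by simp
    show "0 \<le> Im w \<or> \<bar>Im w\<bar> \<le> 2 * h / \<kappa> * \<bar>Re w\<bar>"
      using small big by (cases "\<bar>xj\<bar> \<le> \<kappa>") auto
  qed
  show "\<bar>Arg w\<bar> < pi / 2" if "xj > h"
  proof -
    have "Re w > 0" using that re by linarith
    then show ?thesis using Arg_Re_pos[of w] by simp
  qed
  show "\<bar>Arg w\<bar> > pi / 2" if "xj < - h"
  proof -
    have "\<not> Re w \<ge> 0" using that re by linarith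
    then show ?thesis using Arg_Re_nonneg[of w] by linarith
  qed
  show "\<bar>Arg w\<bar> \<le> 2 * h / \<kappa>" if "xj > \<kappa>"
  proof -
    have "Re w > 0" using that re hk k0 by linarith
    then have "\<bar>Arg w\<bar> \<le> \<bar>Im w\<bar> / Re w" by (rule Arg_Re_pos_bound)
    also have "\<dots> \<le> 2 * h / \<kappa>"
    proof -
      have "\<bar>Im w\<bar> \<le> (2 * h / \<kappa>) * Re w" using big that k0 \<open>Re w > 0\<close> by auto
      then show ?thesis by (simp only: pos_divide_le_eq[OF \<open>Re w > 0\<close>])
    qed
    finally show ?thesis .
  qed
  show "\<bar>Arg w\<bar> \<ge> pi - 2 * h / \<kappa>" if "xj < - \<kappa>"
  proof -
    have rn: "Re w < 0" using that re hk k0 by linarith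
    have ra: "\<bar>Re w\<bar> > 0" using rn by simp
    have "\<bar>Im w\<bar> \<le> (2 * h / \<kappa>) * \<bar>Re w\<bar>" using big that k0 by auto
    then have "\<bar>Im w\<bar> / \<bar>Re w\<bar> \<le> 2 * h / \<kappa>" by (simp only: pos_divide_le_eq[OF ra])
    then show ?thesis using Arg_Re_neg_bound[OF rn] by linarith
  qed
qed

lemma tor_dist_nonneg: "tor_dist a b \<ge> 0"
  unfolding tor_dist_def by (rule cInf_greatest) auto

lemma tor_dist_le: "tor_dist a b \<le> norm (a - b - (2 * pi) *\<^sub>R (\<chi> j. of_int (k j)) - t *\<^sub>R (ones::real^'k))"
  unfolding tor_dist_def
  by (rule cInf_lower) (auto intro: bdd_belowI[of _ 0])

lemma sphereS_nonempty:
  assumes "CARD('k::finite) \<ge> 3" shows "(sphereS::(real^'k) set) \<noteq> {}"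
proof -
  have "CARD('k) \<ge> 2" using assms by simp
  obtain a :: 'k where True by simp
  have "card ((UNIV::'k set) - {a}) > 0" using \<open>CARD('k) \<ge> 2\<close> by (simp add: card_Diff_singleton)
  then obtain b where "b \<in> (UNIV::'k set) - {a}" by (metis card_gt_0_iff ex_in_conv)
  then have ab: "a \<noteq> b" by auto
  define x :: "real^'k" where "x = (1 / sqrt 2) *\<^sub>R (axis a 1 - axis b 1)"
  have s0: "sum (\<lambda>j. (axis a 1 - axis b 1 :: real^'k)$j) UNIV = 0"
    by (simp add: axis_def sum_subtractf)
  have "sum (\<lambda>j. x$j) UNIV = (1 / sqrt 2) * sum (\<lambda>j. (axis a 1 - axis b 1 :: real^'k)$j) UNIV"
    unfolding x_def by (simp only: vector_scaleR_component sum_distrib_left) simp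
  then have "sum (\<lambda>j. x$j) UNIV = 0" using s0 by simp
  moreover have "x \<bullet> x = 1"
  proof -
    have "(axis a 1 - axis b 1 :: real^'k) \<bullet> (axis a 1 - axis b 1) = 2"
      using ab by (simp add: inner_diff_left inner_diff_right inner_axis_axis)
    then show ?thesis by (simp add: x_def)
  qed
  ultimately have "x \<in> sphereS" unfolding sphereS_def by simp
  then show ?thesis by blast
qed

lemma theta_bounds:
  assumes "\<Theta> = (\<chi> j. \<bar>Arg (wj j)\<bar> / pi)"
  shows "0 \<le> \<Theta>$j" "\<Theta>$j \<le> 1"
proof -
  have "\<bar>Arg (wj j)\<bar> \<le> pi" using mpi_less_Arg[of "wj j"] Arg_le_pi[of "wj j"] by auto
  then show "0 \<le> \<Theta>$j" "\<Theta>$j \<le> 1" using assms by auto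
qed

lemma spn_theta:
  fixes \<Theta> :: "real^'k"
  assumes th: "\<And>j. 0 \<le> \<Theta>$j \<and> \<Theta>$j \<le> 1"
    and jp: "\<Theta>$jp \<le> b" and jm: "\<Theta>$jm \<ge> 1 - b" and b: "0 \<le> b" "b \<le> 1/4"
  shows "spn \<Theta> \<ge> 1 - 2 * b" "spn \<Theta> \<le> 1" "mnv \<Theta> \<le> b" "mnv \<Theta> \<ge> 0"
proof -
  show "spn \<Theta> \<ge> 1 - 2 * b" using spn_ge[of \<Theta> jm jp] jp jm by linarith
  obtain i1 where i1: "mxv \<Theta> = \<Theta>$i1" using mxv_ex by blast
  obtain i2 where i2: "mnv \<Theta> = \<Theta>$i2" using mnv_ex by blast
  show "spn \<Theta> \<le> 1" "mnv \<Theta> \<ge> 0" unfolding spn_def using i1 i2 th[of i1] th[of i2] by auto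
  show "mnv \<Theta> \<le> b" using mnv_le[of \<Theta> jp] jp by linarith
qed

lemma sum_neg:
  fixes \<Theta> x :: "real^'k"
  assumes x: "x \<in> sphereS"
    and th: "\<And>j. 0 \<le> \<Theta>$j \<and> \<Theta>$j \<le> 1"
    and sg: "\<And>j. (x$j > h \<longrightarrow> \<Theta>$j < 1/2) \<and> (x$j < - h \<longrightarrow> \<Theta>$j > 1/2)"
    and jp: "x$jp \<ge> 1 / (2 * real CARD('k))" "\<Theta>$jp \<le> 1/4"
    and h: "0 \<le> h" "h \<le> 1 / (4 * (real CARD('k))^2)"
  shows "\<Theta> \<bullet> x \<le> 0"
proof -
  let ?K = "real CARD('k)"
  have K1: "?K \<ge> 1" by simp
  have tm: "(\<Theta>$j - 1/2) * x$j \<le> h / 2" for j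
  proof (cases "\<bar>x$j\<bar> \<le> h")
    case True
    have "\<bar>\<Theta>$j - 1/2\<bar> \<le> 1/2" unfolding abs_le_iff using th[of j] by linarith
    then have "\<bar>(\<Theta>$j - 1/2) * x$j\<bar> \<le> 1/2 * h" unfolding abs_mult
      using True by (intro mult_mono) auto
    then show ?thesis by linarith
  next
    case False
    then have "(x$j > h \<and> \<Theta>$j < 1/2) \<or> (x$j < - h \<and> \<Theta>$j > 1/2)" using sg[of j] by auto
    then have "(\<Theta>$j - 1/2) * x$j \<le> 0"
    proof (elim disjE)
      assume a: "x$j > h \<and> \<Theta>$j < 1/2"
      show ?thesis by (rule mult_nonpos_nonneg) (use a h(1) in linarith)+
    next
      assume a: "x$j < - h \<and> \<Theta>$j > 1/2"
      show ?thesis by (rule mult_nonneg_nonpos) (use a h(1) in linarith)+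
    qed
    then show ?thesis using h by linarith
  qed
  have tjp: "(\<Theta>$jp - 1/2) * x$jp \<le> - (1 / (8 * ?K))"
  proof -
    have "(\<Theta>$jp - 1/2) * x$jp \<le> (- 1/4) * x$jp"
      using jp K1 by (intro mult_right_mono) (auto simp: le_divide_eq order_trans[OF _ jp(1)])
    also have "\<dots> \<le> (- 1/4) * (1 / (2 * ?K))" using jp(1) by simp
    finally show ?thesis by simp
  qed
  have "\<Theta> \<bullet> x = (\<Sum>j\<in>UNIV. (\<Theta>$j - 1/2) * x$j)"
    using sphereS_sum[OF x] by (simp add: inner_vec_def left_diff_distrib sum_subtractf sum_distrib_left[symmetric] sum_divide_distrib[symmetric])
  also have "\<dots> = (\<Theta>$jp - 1/2) * x$jp + (\<Sum>j\<in>UNIV - {jp}. (\<Theta>$j - 1/2) * x$j)"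
    by (simp add: sum.remove)
  also have "\<dots> \<le> - (1 / (8 * ?K)) + (\<Sum>j\<in>(UNIV::'k set) - {jp}. h / 2)"
    by (intro add_mono tjp sum_mono tm)
  also have "\<dots> = - (1 / (8 * ?K)) + (?K - 1) * (h / 2)" by (simp add: card_Diff_singleton)
  also have "\<dots> \<le> 0"
  proof -
    have "(?K - 1) * (h / 2) \<le> ?K * (h / 2)" using h by (simp add: mult_right_mono)
    also have "\<dots> \<le> ?K * (1 / (8 * ?K^2))" using h K1 by (intro mult_left_mono) auto
    also have "\<dots> = 1 / (8 * ?K)" using K1 by (simp add: power2_eq_square)
    finally show ?thesis by linarith
  qed
  finally show ?thesis .
qed

lemma dist_bound:
  fixes z :: "complex^'k" and wj :: "'k \<Rightarrow> complex" and \<Theta> :: "real^'k"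
  assumes lam0: "lm \<noteq> 0" and zw: "\<And>j. z$j = lm * wj j" and w0: "\<And>j. wj j \<noteq> 0"
    and Th: "\<Theta> = (\<chi> j. \<bar>Arg (wj j)\<bar> / pi)"
    and err: "\<And>j. \<exists>k::int. \<bar>Arg (wj j) - \<bar>Arg (wj j)\<bar> - 2 * pi * k\<bar> \<le> 2 * a"
    and jp: "\<Theta>$jp \<le> a" and jm: "\<Theta>$jm \<ge> 1 - a" and a: "0 \<le> a" "a \<le> 1/4"
  shows "tor_dist (ArgV z) (pi *\<^sub>R ((1 / spn (Pm \<Theta>)) *\<^sub>R Pm \<Theta>)) \<le> real CARD('k) * (2 * a + 4 * pi * a)"
proof -
  have th: "\<And>j. 0 \<le> \<Theta>$j \<and> \<Theta>$j \<le> 1" using theta_bounds[OF Th] by blast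
  note sp = spn_theta[OF th jp jm a]
  define s where "s = spn \<Theta>"
  have s: "s \<ge> 1 - 2 * a" "s \<le> 1" "s \<ge> 1/2" using sp a unfolding s_def by auto
  define c where "c = sum (\<lambda>j. \<Theta>$j) UNIV / real CARD('k)"
  define mn where "mn = mnv \<Theta>"
  have mn: "0 \<le> mn" "mn \<le> a" using sp unfolding mn_def by auto
  have PmT: "Pm \<Theta> = \<Theta> + (- c) *\<^sub>R ones" unfolding Pm_alt c_def ..
  have ss: "spn (Pm \<Theta>) = s" unfolding s_def by (rule spn_Pm)
  have "\<forall>j. \<exists>k::int. Arg (z$j) = Arg lm + Arg (wj j) + 2 * pi * k"
    using Arg_mult_mod[OF lam0 w0] zw by metis
  then obtain k1 :: "'k \<Rightarrow> int" where k1: "\<And>j. Arg (z$j) = Arg lm + Arg (wj j) + 2 * pi * k1 j"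
    by metis
  obtain k2 :: "'k \<Rightarrow> int" where k2: "\<And>j. \<bar>Arg (wj j) - \<bar>Arg (wj j)\<bar> - 2 * pi * k2 j\<bar> \<le> 2 * a"
    using err by metis
  define t where "t = Arg lm - (pi / s) * (mn - c)"
  define V where "V = ArgV z - pi *\<^sub>R ((1 / spn (Pm \<Theta>)) *\<^sub>R Pm \<Theta>) - (2 * pi) *\<^sub>R (\<chi> j. of_int (k1 j + k2 j)) - t *\<^sub>R (ones::real^'k)"
  have Vj: "\<bar>V$j\<bar> \<le> 2 * a + 4 * pi * a" for j
  proof -
    have aw: "\<bar>Arg (wj j)\<bar> = pi * \<Theta>$j" unfolding Th by simp
    have "V$j = (Arg (wj j) - \<bar>Arg (wj j)\<bar> - 2 * pi * k2 j) + (pi * \<Theta>$j - (pi / s) * (\<Theta>$j - mn))"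
      unfolding V_def ArgV_def ss unfolding PmT t_def using k1[of j] aw
      by (simp add: ones_def algebra_simps add_divide_distrib[symmetric])
    moreover have "\<bar>pi * \<Theta>$j - (pi / s) * (\<Theta>$j - mn)\<bar> \<le> 4 * pi * a"
    proof -
      have e1: "pi * \<Theta>$j - (pi / s) * (\<Theta>$j - mn) = (pi / s) * (mn - \<Theta>$j * (1 - s))"
        using s by (simp add: field_simps)
      have t1: "0 \<le> \<Theta>$j * (1 - s)" using th[of j] s by simp
      have t2: "\<Theta>$j * (1 - s) \<le> 1 * (2 * a)" using th[of j] s by (intro mult_mono) auto
      have "\<bar>mn - \<Theta>$j * (1 - s)\<bar> \<le> 2 * a" using t1 t2 mn by (simp add: abs_le_iff)
      moreover have "0 < pi / s" "pi / s \<le> 2 * pi" using s by (auto simp: field_simps)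
      ultimately have "(pi / s) * \<bar>mn - \<Theta>$j * (1 - s)\<bar> \<le> (2 * pi) * (2 * a)"
        by (intro mult_mono) auto
      then show ?thesis unfolding e1 abs_mult using s by simp
    qed
    ultimately show ?thesis using k2[of j] by linarith
  qed
  have "tor_dist (ArgV z) (pi *\<^sub>R ((1 / spn (Pm \<Theta>)) *\<^sub>R Pm \<Theta>)) \<le> norm V"
    unfolding V_def by (rule tor_dist_le)
  also have "\<dots> \<le> (\<Sum>j\<in>UNIV. \<bar>V$j\<bar>)" by (rule norm_le_l1_cart)
  also have "\<dots> \<le> (\<Sum>j\<in>(UNIV::'k set). 2 * a + 4 * pi * a)" by (intro sum_mono Vj)
  finally show ?thesis by simp
qed

lemma pw_bounds:
  fixes lm Dj rj \<beta> zj :: complex and xj \<xi>j \<epsilon> m e B0 Bb :: real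
  assumes zj: "zj = lm * complex_of_real xj + complex_of_real \<epsilon> * Dj + rj"
    and Dj: "Dj = \<i> * lm * complex_of_real \<xi>j + \<beta> * complex_of_real xj"
    and lm: "m \<le> cmod lm" "m > 0" and ep: "\<epsilon> \<ge> 0"
    and b1: "cmod Dj \<le> B0" and b2: "cmod rj \<le> \<epsilon> * e" and b3: "cmod \<beta> / m \<le> Bb"
  shows "cmod (zj / lm - complex_of_real xj) \<le> \<epsilon> * ((B0 + e) / m)"
    "Im (zj / lm) \<ge> \<epsilon> * \<xi>j - \<epsilon> * \<bar>xj\<bar> * Bb - \<epsilon> * e / m"
proof -
  have lm0: "lm \<noteq> 0" using lm by auto
  have cl: "cmod lm > 0" using lm0 by simp
  have "zj / lm - complex_of_real xj = (complex_of_real \<epsilon> * Dj + rj) / lm"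
    unfolding zj using lm0 by (simp add: field_simps)
  then have "cmod (zj / lm - complex_of_real xj) = cmod (complex_of_real \<epsilon> * Dj + rj) / cmod lm"
    by (simp add: norm_divide)
  also have "\<dots> \<le> (\<epsilon> * B0 + \<epsilon> * e) / cmod lm"
  proof (rule divide_right_mono)
    have "cmod (complex_of_real \<epsilon> * Dj + rj) \<le> cmod (complex_of_real \<epsilon> * Dj) + cmod rj" by (rule norm_triangle_ineq)
    also have "\<dots> \<le> \<epsilon> * B0 + \<epsilon> * e"
    proof -
      have "cmod (complex_of_real \<epsilon> * Dj) = \<epsilon> * cmod Dj" using ep by (simp add: norm_mult)
      moreover have "\<epsilon> * cmod Dj \<le> \<epsilon> * B0" by (rule mult_left_mono[OF b1 ep])
      ultimately show ?thesis using b2 by linarith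
    qed
    finally show "cmod (complex_of_real \<epsilon> * Dj + rj) \<le> \<epsilon> * B0 + \<epsilon> * e" .
  qed simp
  also have "\<dots> \<le> (\<epsilon> * B0 + \<epsilon> * e) / m"
  proof (rule divide_left_mono)
    have "cmod Dj \<ge> 0" "cmod rj \<ge> 0" by simp_all
    then show "0 \<le> \<epsilon> * B0 + \<epsilon> * e" using b1 b2 ep by (smt (verit) mult_nonneg_nonneg)
  next
    show "0 < cmod lm * m" by (rule mult_pos_pos[OF cl lm(2)])
  qed (use lm in auto)
  also have "\<dots> = \<epsilon> * ((B0 + e) / m)" by (simp add: algebra_simps add_divide_distrib)
  finally show "cmod (zj / lm - complex_of_real xj) \<le> \<epsilon> * ((B0 + e) / m)" .
  have eq: "zj / lm = complex_of_real xj + complex_of_real \<epsilon> * (\<i> * complex_of_real \<xi>j) +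
      complex_of_real \<epsilon> * complex_of_real xj * (\<beta> / lm) + rj / lm"
    unfolding zj Dj using lm0 by (simp add: field_simps)
  have i1: "Im (complex_of_real \<epsilon> * complex_of_real xj * (\<beta> / lm)) \<ge> - (\<epsilon> * \<bar>xj\<bar> * Bb)"
  proof -
    have "\<bar>Im (complex_of_real \<epsilon> * complex_of_real xj * (\<beta> / lm))\<bar> \<le> cmod (complex_of_real \<epsilon> * complex_of_real xj * (\<beta> / lm))"
      by (rule abs_Im_le_cmod)
    also have "\<dots> = \<epsilon> * \<bar>xj\<bar> * (cmod \<beta> / cmod lm)" using ep by (simp add: norm_mult norm_divide)
    also have "\<dots> \<le> \<epsilon> * \<bar>xj\<bar> * Bb"
    proof (rule mult_left_mono)
      have "cmod \<beta> / cmod lm \<le> cmod \<beta> / m"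
        by (rule divide_left_mono[OF lm(1)]) (simp, rule mult_pos_pos[OF cl lm(2)])
      then show "cmod \<beta> / cmod lm \<le> Bb" using b3 by linarith
    qed (use ep in simp)
    finally show ?thesis by linarith
  qed
  have i2: "Im (rj / lm) \<ge> - (\<epsilon> * e / m)"
  proof -
    have "\<bar>Im (rj / lm)\<bar> \<le> cmod (rj / lm)" by (rule abs_Im_le_cmod)
    also have "\<dots> = cmod rj / cmod lm" by (simp add: norm_divide)
    also have "\<dots> \<le> cmod rj / m"
      by (rule divide_left_mono[OF lm(1)]) (simp, rule mult_pos_pos[OF cl lm(2)])
    also have "\<dots> \<le> \<epsilon> * e / m" using b2 lm by (intro divide_right_mono) auto
    finally show ?thesis by linarith
  qed
  have "Im (zj / lm) = \<epsilon> * \<xi>j + Im (complex_of_real \<epsilon> * complex_of_real xj * (\<beta> / lm)) + Im (rj / lm)"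
    unfolding eq by simp
  then show "Im (zj / lm) \<ge> \<epsilon> * \<xi>j - \<epsilon> * \<bar>xj\<bar> * Bb - \<epsilon> * e / m" using i1 i2 by linarith
qed

lemma hprod_cvec_bound:
  assumes x: "x \<in> (sphereS::(real^'k) set)"
  shows "cmod (hprod a (cvec x)) \<le> real CARD('k) * norm a"
proof -
  have "cmod (hprod a (cvec x)) \<le> (\<Sum>j\<in>UNIV. cmod (a$j * cnj (cvec x $ j)))"
    unfolding hprod_def by (rule norm_sum)
  also have "\<dots> \<le> (\<Sum>j\<in>(UNIV::'k set). norm a)"
  proof (rule sum_mono)
    fix j
    have "cmod (a$j * cnj (cvec x $ j)) = cmod (a$j) * \<bar>x$j\<bar>" by (simp add: norm_mult cvec_nth)
    also have "\<dots> \<le> norm a * 1"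
    proof (rule mult_mono)
      show "cmod (a$j) \<le> norm a" by (rule Finite_Cartesian_Product.norm_nth_le)
      show "\<bar>x$j\<bar> \<le> 1" by (rule sphereS_comp[OF x])
    qed simp_all
    finally show "cmod (a$j * cnj (cvec x $ j)) \<le> norm a" by simp
  qed
  finally show ?thesis by simp
qed

lemma main_est:
  fixes I :: "(real^'k) \<times> (real^'k) \<Rightarrow> complex^'k" and g :: "real \<Rightarrow> real"
  assumes card: "CARD('k::finite) \<ge> 3" and d0: "0 < \<delta>" and d1: "\<delta> < 1 / (4 * real CARD('k))"
    and ag: "admissible_g \<delta> g" and adm: "admissible_lift \<eta> I"
  shows "\<exists>p :: real \<Rightarrow> real^'k \<Rightarrow> real^'k. \<exists>\<epsilon>0>0. \<exists>L. \<forall>\<epsilon>. 0 < \<epsilon> \<and> \<epsilon> < \<epsilon>0 \<longrightarrow>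
     continuous_on sphereS (p \<epsilon>) \<and> p \<epsilon> ` sphereS \<subseteq> bdZn \<and> (\<forall>x\<in>sphereS. p \<epsilon> x \<bullet> x \<le> 0) \<and>
     (\<forall>x\<in>sphereS. tor_dist (ArgV (Lift_L I g \<epsilon> x)) (pi *\<^sub>R p \<epsilon> x) \<le> L * \<epsilon>)"
proof -
  let ?S = "sphereS :: (real^'k) set"
  let ?K = "real CARD('k)"
  let ?D = "\<lambda>x. frechet_derivative I (at (x, 0)) (0, grad_f g x)"
  have K1: "?K \<ge> 1" by simp
  note gf = adm_g_facts[OF ag d0]
  define Xf where "Xf = (grad_f g :: real^'k \<Rightarrow> real^'k)"
  have cX: "continuous_on UNIV Xf" unfolding Xf_def by (rule grad_cont[OF gf(1)])
  have perp: "\<And>x. x \<in> ?S \<Longrightarrow> Xf x \<bullet> x = 0" unfolding Xf_def by (rule grad_perp)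
  have sumz: "\<And>x. x \<in> ?S \<Longrightarrow> sum (\<lambda>j. Xf x $ j) UNIV = 0" unfolding Xf_def by (rule grad_sum)
  obtain U where U: "open U" "diskT \<eta> \<subseteq> U" "\<And>p. p \<in> U \<Longrightarrow> I differentiable (at p)"
    "\<And>v. continuous_on U (\<lambda>p. frechet_derivative I (at p) v)" "continuous_on U I"
    using adm_U[OF adm] by metis
  have eta: "\<eta> > 0" by (rule adm_eta[OF adm])
  have x0U: "(x, 0) \<in> U" if "x \<in> ?S" for x using in_diskT[of x 0 \<eta>] that eta U(2) by auto
  have c1: "continuous_on ?S (\<lambda>x. I (x, 0))"
  proof -
    have "(\<lambda>x. (x, 0::real^'k)) ` ?S \<subseteq> U" using x0U by auto
    moreover have "continuous_on ?S (\<lambda>x. (x, 0::real^'k))" by (intro continuous_intros)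
    ultimately show ?thesis using continuous_on_compose2[OF U(5)] by blast
  qed
  have c2: "continuous_on ?S (cvec :: real^'k \<Rightarrow> complex^'k)"
    by (rule linear_continuous_on[OF bl_cvec])
  have clam: "continuous_on ?S (lam I)"
  proof -
    have "continuous_on ?S (\<lambda>x. \<Sum>j\<in>UNIV. I (x, 0) $ j * cnj (cvec x $ j))"
      by (intro continuous_on_sum continuous_on_mult continuous_on_cnj continuous_on_component c1 c2)
    then show ?thesis unfolding lam_def[abs_def] hprod_def .
  qed
  have Sne: "?S \<noteq> {}" by (rule sphereS_nonempty[OF card])
  obtain x0 where x0: "x0 \<in> ?S" "\<And>x. x \<in> ?S \<Longrightarrow> cmod (lam I x0) \<le> cmod (lam I x)"
    using continuous_attains_inf[OF sphereS_compact Sne continuous_on_norm[OF clam]] by auto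
  define m where "m = cmod (lam I x0)"
  have m: "m > 0" "\<And>x. x \<in> ?S \<Longrightarrow> m \<le> cmod (lam I x)"
    using I_zero(2)[OF adm x0(1)] x0 unfolding m_def by auto
  define e where "e = m / (4 * ?K)"
  have e: "e > 0" unfolding e_def using m K1 by simp
  obtain \<epsilon>1 B where \<epsilon>1: "\<epsilon>1 > 0" and B: "\<And>x. x \<in> ?S \<Longrightarrow> norm (frechet_derivative I (at (x, 0)) (0, Xf x)) \<le> B"
    and T: "\<And>\<epsilon> x. 0 < \<epsilon> \<Longrightarrow> \<epsilon> < \<epsilon>1 \<Longrightarrow> x \<in> ?S \<Longrightarrow> (x, \<epsilon> *\<^sub>R Xf x) \<in> diskT \<eta> \<and>
       norm (I (x, \<epsilon> *\<^sub>R Xf x) - I (x, 0) - \<epsilon> *\<^sub>R frechet_derivative I (at (x, 0)) (0, Xf x)) \<le> \<epsilon> * e"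
    using taylor_unif[OF adm cX perp sumz e] by metis
  define B0 where "B0 = max B 0"
  define Cc where "Cc = (B0 + e) / m"
  define Bb where "Bb = ?K * B0 / m"
  define \<kappa> where "\<kappa> = min (\<delta>/2) (1 / (4 * ?K * (?K + Bb + 1)))"
  have B0: "B0 \<ge> 0" "B0 \<ge> B" unfolding B0_def by auto
  have Cc: "Cc > 0" unfolding Cc_def using B0 e m by simp
  have Bb: "Bb \<ge> 0" unfolding Bb_def using B0 m by simp
  have kp: "\<kappa> > 0" unfolding \<kappa>_def using d0 Bb K1 by (simp add: add_pos_nonneg)
  have kd: "\<kappa> \<le> \<delta>/2" unfolding \<kappa>_def by simp
  have k2: "\<kappa> \<le> 1 / (4 * ?K * (?K + Bb + 1))" unfolding \<kappa>_def by simp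
  have k3: "\<kappa> * (?K + Bb) \<le> 1 / (4 * ?K)"
  proof -
    have "\<kappa> * (?K + Bb) \<le> (1 / (4 * ?K * (?K + Bb + 1))) * (?K + Bb + 1)"
      using k2 kp Bb K1 by (intro mult_mono) auto
    also have "\<dots> = 1 / (4 * ?K)"
    proof -
      have ne: "?K + Bb + 1 \<noteq> 0" using Bb K1 by linarith
      show ?thesis using ne by simp
    qed
    finally show ?thesis .
  qed
  have k4: "\<kappa> < 1 / (2 * ?K)"
  proof -
    have "\<kappa> * ?K \<le> 1 / (4 * ?K)" using k3 kp Bb by (smt (verit) mult_left_mono)
    then have "\<kappa> \<le> 1 / (4 * ?K^2)" using K1 by (simp add: field_simps power2_eq_square)
    also have "\<dots> < 1 / (2 * ?K)" using K1 by (simp add: field_simps power2_eq_square, linarith)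
    finally show ?thesis .
  qed
  have k5: "\<kappa> / 8 \<le> 1 / (4 * ?K^2)"
  proof -
    have "\<kappa> * ?K \<le> 1 / (4 * ?K)" using k3 kp Bb by (smt (verit) mult_left_mono)
    then have "\<kappa> \<le> 1 / (4 * ?K^2)" using K1 by (simp add: field_simps power2_eq_square)
    then show ?thesis using kp by linarith
  qed
  define \<epsilon>0 where "\<epsilon>0 = min \<epsilon>1 (\<kappa> / (8 * Cc))"
  have \<epsilon>0: "\<epsilon>0 > 0" unfolding \<epsilon>0_def using \<epsilon>1 kp Cc by simp
  define w where "w \<epsilon> x j = I (x, \<epsilon> *\<^sub>R Xf x) $ j / lam I x" for \<epsilon> x j
  define \<Theta> where "\<Theta> \<epsilon> x = (\<chi> j. \<bar>Arg (w \<epsilon> x j)\<bar> / pi)" for \<epsilon> x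
  define p where "p \<epsilon> x = (1 / spn (Pm (\<Theta> \<epsilon> x))) *\<^sub>R Pm (\<Theta> \<epsilon> x)" for \<epsilon> x
  define L where "L = ?K * (2 + 4 * pi) * (2 * Cc / \<kappa>)"
  have PT: "cmod (w \<epsilon> x j - complex_of_real (x$j)) \<le> \<epsilon> * Cc \<and> (\<bar>x$j\<bar> \<le> \<kappa> \<longrightarrow> Im (w \<epsilon> x j) > 0)"
    if ep: "0 < \<epsilon>" "\<epsilon> < \<epsilon>0" and x: "x \<in> ?S" for \<epsilon> x j
  proof -
    define lm where "lm = lam I x"
    define D where "D = frechet_derivative I (at (x, 0)) (0, Xf x)"
    define r where "r = I (x, \<epsilon> *\<^sub>R Xf x) - I (x, 0) - \<epsilon> *\<^sub>R D"
    define \<beta> where "\<beta> = hprod D (cvec x)"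
    have ep1: "\<epsilon> < \<epsilon>1" using ep unfolding \<epsilon>0_def by simp
    have rn: "norm r \<le> \<epsilon> * e" using T[OF ep(1) ep1 x] unfolding r_def D_def by blast
    have I0: "I (x, 0) = lm *s cvec x" unfolding lm_def by (rule I_zero(1)[OF adm x])
    have zj: "I (x, \<epsilon> *\<^sub>R Xf x) $ j = lm * complex_of_real (x$j) + complex_of_real \<epsilon> * D$j + r$j"
      unfolding r_def I0 by (simp add: cvec_nth sR_nth cR)
    have Dd: "D = (\<i> * lm) *s cvec (Xf x) + \<beta> *s cvec x"
      unfolding D_def \<beta>_def lm_def by (rule key_decomp[OF adm x perp[OF x] sumz[OF x]])
    have Dj: "D$j = \<i> * lm * complex_of_real (Xf x $ j) + \<beta> * complex_of_real (x$j)"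
      by (subst Dd) (simp add: cvec_nth)
    have b1: "cmod (D$j) \<le> B0" using Finite_Cartesian_Product.norm_nth_le[of D j] B[OF x] B0 unfolding D_def by linarith
    have b2: "cmod (r$j) \<le> \<epsilon> * e" using Finite_Cartesian_Product.norm_nth_le[of r j] rn by linarith
    have b3: "cmod \<beta> / m \<le> Bb"
    proof -
      have "cmod \<beta> \<le> ?K * norm D" unfolding \<beta>_def by (rule hprod_cvec_bound[OF x])
      also have "\<dots> \<le> ?K * B0" using B[OF x] B0 unfolding D_def by (intro mult_left_mono) auto
      finally show ?thesis unfolding Bb_def using m by (intro divide_right_mono) auto
    qed
    have lmm: "m \<le> cmod lm" unfolding lm_def by (rule m(2)[OF x])
    note pw = pw_bounds[OF zj Dj lmm m(1) less_imp_le[OF ep(1)] b1 b2 b3]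
    have wdef: "w \<epsilon> x j = I (x, \<epsilon> *\<^sub>R Xf x) $ j / lm" unfolding w_def lm_def ..
    have A: "cmod (w \<epsilon> x j - complex_of_real (x$j)) \<le> \<epsilon> * Cc" unfolding wdef Cc_def by (rule pw(1))
    have "Im (w \<epsilon> x j) > 0" if xs: "\<bar>x$j\<bar> \<le> \<kappa>"
    proof -
      have xd: "\<bar>x$j\<bar> < \<delta>" using xs kd d0 by linarith
      have xi: "Xf x $ j \<ge> 3 / (4 * ?K) - ?K * \<bar>x$j\<bar>"
        unfolding Xf_def by (rule grad_lower[OF ag d0 d1 x xd])
      have em: "e / m = 1 / (4 * ?K)" unfolding e_def using m by simp
      have "Im (w \<epsilon> x j) \<ge> \<epsilon> * Xf x $ j - \<epsilon> * \<bar>x$j\<bar> * Bb - \<epsilon> * e / m" unfolding wdef by (rule pw(2))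
      also have "\<epsilon> * Xf x $ j - \<epsilon> * \<bar>x$j\<bar> * Bb - \<epsilon> * e / m = \<epsilon> * (Xf x $ j - \<bar>x$j\<bar> * Bb - e / m)"
        by (simp add: algebra_simps)
      finally have i: "Im (w \<epsilon> x j) \<ge> \<epsilon> * (Xf x $ j - \<bar>x$j\<bar> * Bb - e / m)" .
      have "\<bar>x$j\<bar> * (?K + Bb) \<le> \<kappa> * (?K + Bb)" using xs Bb K1 by (intro mult_right_mono) auto
      then have "Xf x $ j - \<bar>x$j\<bar> * Bb - e / m \<ge> 1 / (4 * ?K)"
        using xi k3 em by (simp add: algebra_simps)
      moreover have "1 / (4 * ?K) > 0" using K1 by simp
      ultimately have "Xf x $ j - \<bar>x$j\<bar> * Bb - e / m > 0" by linarith
      then have "\<epsilon> * (Xf x $ j - \<bar>x$j\<bar> * Bb - e / m) > 0" using ep by (simp add: mult_pos_pos)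
      then show ?thesis using i by linarith
    qed
    then show ?thesis using A by blast
  qed
  have hk: "\<epsilon> * Cc \<le> \<kappa> / 8" if "0 < \<epsilon>" "\<epsilon> < \<epsilon>0" for \<epsilon>
  proof -
    have "\<epsilon> < \<kappa> / (8 * Cc)" using that unfolding \<epsilon>0_def by simp
    then show ?thesis using Cc by (simp add: field_simps)
  qed
  have MAIN: "continuous_on ?S (p \<epsilon>) \<and> p \<epsilon> ` ?S \<subseteq> bdZn \<and> (\<forall>x\<in>?S. p \<epsilon> x \<bullet> x \<le> 0) \<and>
     (\<forall>x\<in>?S. tor_dist (ArgV (Lift_L I g \<epsilon> x)) (pi *\<^sub>R p \<epsilon> x) \<le> L * \<epsilon>)"
    if ep: "0 < \<epsilon>" "\<epsilon> < \<epsilon>0" for \<epsilon>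
  proof -
    define h where "h = \<epsilon> * Cc"
    define a where "a = 2 * h / \<kappa>"
    have hk': "h \<le> \<kappa> / 8" unfolding h_def by (rule hk[OF ep])
    have h0: "h \<ge> 0" unfolding h_def using ep Cc by simp
    have a0: "0 \<le> a" unfolding a_def using h0 kp by simp
    have a1: "a \<le> 1/4" unfolding a_def using hk' kp by (simp add: field_simps)
    have api: "a / pi \<le> a" using a0 by (intro divide_left_mono[of 1 pi a, simplified]) (use pi_ge_two in auto)
    have CF: "w \<epsilon> x j \<noteq> 0"
      "\<exists>k::int. \<bar>Arg (w \<epsilon> x j) - \<bar>Arg (w \<epsilon> x j)\<bar> - 2 * pi * k\<bar> \<le> 2 * a"
      "x$j > h \<Longrightarrow> \<bar>Arg (w \<epsilon> x j)\<bar> < pi / 2"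
      "x$j < - h \<Longrightarrow> \<bar>Arg (w \<epsilon> x j)\<bar> > pi / 2"
      "x$j > \<kappa> \<Longrightarrow> \<bar>Arg (w \<epsilon> x j)\<bar> \<le> a"
      "x$j < - \<kappa> \<Longrightarrow> \<bar>Arg (w \<epsilon> x j)\<bar> \<ge> pi - a"
      if x: "x \<in> ?S" for x j
      using coord_facts[of "w \<epsilon> x j" "x$j" h \<kappa>, OF _ hk' kp] PT[OF ep x, of j]
      unfolding a_def h_def by auto
    have thj: "\<Theta> \<epsilon> x $ j = \<bar>Arg (w \<epsilon> x j)\<bar> / pi" for x j unfolding \<Theta>_def by simp
    have th01: "0 \<le> \<Theta> \<epsilon> x $ j \<and> \<Theta> \<epsilon> x $ j \<le> 1" for x j
      using theta_bounds[OF \<Theta>_def[of \<epsilon> x]] by blast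
    have PX: "spn (Pm (\<Theta> \<epsilon> x)) \<ge> 1/2 \<and> p \<epsilon> x \<in> bdZn \<and> p \<epsilon> x \<bullet> x \<le> 0 \<and>
        tor_dist (ArgV (Lift_L I g \<epsilon> x)) (pi *\<^sub>R p \<epsilon> x) \<le> L * \<epsilon>" if x: "x \<in> ?S" for x
    proof -
      obtain jp where jp: "x$jp \<ge> 1 / (2 * ?K)" using sphereS_pos_coord[OF x] by blast
      obtain jm where jm: "x$jm \<le> - (1 / (2 * ?K))" using sphereS_neg_coord[OF x] by blast
      have tjp: "\<Theta> \<epsilon> x $ jp \<le> a"
      proof -
        have "\<bar>Arg (w \<epsilon> x jp)\<bar> \<le> a" using CF(5)[OF x, of jp] jp k4 by linarith
        then have "\<Theta> \<epsilon> x $ jp \<le> a / pi" unfolding thj by (simp add: divide_right_mono)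
        then show ?thesis using api by linarith
      qed
      have tjm: "\<Theta> \<epsilon> x $ jm \<ge> 1 - a"
      proof -
        have "\<bar>Arg (w \<epsilon> x jm)\<bar> \<ge> pi - a" using CF(6)[OF x, of jm] jm k4 by linarith
        then have "\<Theta> \<epsilon> x $ jm \<ge> (pi - a) / pi" unfolding thj by (simp add: divide_right_mono)
        moreover have "(pi - a) / pi = 1 - a / pi" by (simp add: field_simps)
        ultimately show ?thesis using api by linarith
      qed
      note sp = spn_theta[OF th01 tjp tjm a0 a1]
      have spP: "spn (Pm (\<Theta> \<epsilon> x)) = spn (\<Theta> \<epsilon> x)" by (rule spn_Pm)
      have s12: "spn (Pm (\<Theta> \<epsilon> x)) \<ge> 1/2" using sp(1) a1 spP by linarith
      have pB: "p \<epsilon> x \<in> bdZn"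
      proof -
        have "spn (p \<epsilon> x) = 1" unfolding p_def using s12 by (subst spn_scale) auto
        moreover have "p \<epsilon> x \<in> MR" unfolding p_def by (intro MR_scale Pm_MR)
        ultimately show ?thesis by (simp add: bdZn_eq)
      qed
      have px: "p \<epsilon> x \<bullet> x \<le> 0"
      proof -
        have sg: "(x$j > h \<longrightarrow> \<Theta> \<epsilon> x $ j < 1/2) \<and> (x$j < - h \<longrightarrow> \<Theta> \<epsilon> x $ j > 1/2)" for j
          using CF(3)[OF x, of j] CF(4)[OF x, of j] unfolding thj by (auto simp: field_simps)
        have hh: "h \<le> 1 / (4 * ?K^2)" using hk' k5 by linarith
        have "\<Theta> \<epsilon> x \<bullet> x \<le> 0"
          by (rule sum_neg[OF x th01 sg jp _ h0 hh]) (use tjp a1 in linarith)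
        moreover have "Pm (\<Theta> \<epsilon> x) \<bullet> x = \<Theta> \<epsilon> x \<bullet> x"
        proof -
          have "(ones::real^'k) \<bullet> x = 0" using inner_ones[of x] sphereS_sum[OF x] by (simp add: inner_commute)
          then show ?thesis unfolding Pm_alt by (simp add: inner_add_left inner_diff_left)
        qed
        ultimately show ?thesis unfolding p_def using s12 by (simp add: divide_nonpos_pos)
      qed
      have td: "tor_dist (ArgV (Lift_L I g \<epsilon> x)) (pi *\<^sub>R p \<epsilon> x) \<le> ?K * (2 * a + 4 * pi * a)"
        unfolding p_def
      proof (rule dist_bound[OF I_zero(2)[OF adm x] _ CF(1)[OF x] \<Theta>_def CF(2)[OF x] tjp tjm a0 a1])
        fix j
        show "Lift_L I g \<epsilon> x $ j = lam I x * w \<epsilon> x j"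
          unfolding Lift_L_def w_def Xf_def using I_zero(2)[OF adm x] by simp
      qed
      have aa: "a = (2 * Cc / \<kappa>) * \<epsilon>" unfolding a_def h_def by simp
      have "?K * (2 * a + 4 * pi * a) = L * \<epsilon>"
        unfolding L_def aa by (simp only: distrib_left distrib_right mult.assoc mult.commute mult.left_commute)
      then show ?thesis using s12 pB px td by simp
    qed
    have cont: "continuous_on ?S (p \<epsilon>)"
    proof -
      have ep1: "\<epsilon> < \<epsilon>1" using ep unfolding \<epsilon>0_def by simp
      have cz: "continuous_on ?S (\<lambda>x. I (x, \<epsilon> *\<^sub>R Xf x))"
      proof -
        have "(\<lambda>x. (x, \<epsilon> *\<^sub>R Xf x)) ` ?S \<subseteq> U" using T[OF ep(1) ep1] U(2) by blast
        moreover have "continuous_on ?S (\<lambda>x. (x, \<epsilon> *\<^sub>R Xf x))"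
          by (intro continuous_intros continuous_on_compose2[OF cX]) auto
        ultimately show ?thesis using continuous_on_compose2[OF U(5)] by blast
      qed
      have lam0: "\<forall>x\<in>?S. lam I x \<noteq> 0" using I_zero(2)[OF adm] by blast
      have cw: "continuous_on ?S (\<lambda>x. w \<epsilon> x j)" for j
        unfolding w_def by (intro continuous_on_divide continuous_on_component cz clam lam0)
      have cth: "continuous_on ?S (\<lambda>x. \<bar>Arg (w \<epsilon> x j)\<bar> / pi)" for j
      proof -
        have "continuous_on ?S (\<lambda>x. arccos (Re (w \<epsilon> x j) / cmod (w \<epsilon> x j)) / pi)"
        proof (intro continuous_intros cw ballI)
          fix x assume x: "x \<in> ?S"
          have "\<bar>Re (w \<epsilon> x j)\<bar> \<le> cmod (w \<epsilon> x j)" by (rule abs_Re_le_cmod)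
          moreover have "cmod (w \<epsilon> x j) > 0" using CF(1)[OF x, of j] by simp
          ultimately show "- 1 \<le> Re (w \<epsilon> x j) / cmod (w \<epsilon> x j) \<and> Re (w \<epsilon> x j) / cmod (w \<epsilon> x j) \<le> 1"
            by (simp add: abs_le_iff field_simps)
          show "cmod (w \<epsilon> x j) \<noteq> 0" using CF(1)[OF x, of j] by simp
        qed simp
        then show ?thesis
          by (rule continuous_on_cong[THEN iffD1, rotated 2]) (use CF(1) abs_Arg_arccos in auto)
      qed
      have cT: "continuous_on ?S (\<Theta> \<epsilon>)"
        unfolding \<Theta>_def[abs_def] by (intro continuous_on_vec_lambda cth)
      have cP: "continuous_on ?S (\<lambda>x. Pm (\<Theta> \<epsilon> x))"
        unfolding Pm_def by (intro continuous_intros cT) (simp add: ones_ones)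
      have cs: "continuous_on ?S (\<lambda>x. spn (Pm (\<Theta> \<epsilon> x)))"
        by (rule continuous_on_compose2[OF cont_spn[of UNIV] cP]) auto
      have "\<forall>x\<in>?S. spn (Pm (\<Theta> \<epsilon> x)) \<noteq> 0" using PX by fastforce
      then show ?thesis unfolding p_def[abs_def] by (intro continuous_intros cs cP) auto
    qed
    show ?thesis using cont PX by blast
  qed
  show ?thesis using MAIN \<epsilon>0 by blast
qed

theorem proposition2p14:
  assumes "CARD('k::finite) \<ge> 3"
  shows "\<exists>\<delta>0>0. \<forall>\<delta> g \<eta> (I :: (real^'k) \<times> (real^'k) \<Rightarrow> complex^'k).
           0 < \<delta> \<and> \<delta> < \<delta>0 \<and> admissible_g \<delta> g \<and> admissible_lift \<eta> I \<longrightarrow>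
           (\<exists>p :: real \<Rightarrow> real^'k \<Rightarrow> real^'k. \<exists>\<epsilon>0>0.
              (\<forall>\<epsilon>. 0 < \<epsilon> \<and> \<epsilon> < \<epsilon>0 \<longrightarrow>
                 homotopy_equivalence_map (top_of_set sphereS) (top_of_set bdZn) (p \<epsilon>)) \<and>
              ((\<lambda>\<epsilon>. SUP x\<in>sphereS. tor_dist (ArgV (Lift_L I g \<epsilon> x)) (pi *\<^sub>R p \<epsilon> x))
                 \<longlongrightarrow> 0) (at_right 0))"
proof (intro exI[of _ "1 / (4 * real CARD('k))"] conjI allI impI)
  show "0 < 1 / (4 * real CARD('k))" by simp
  fix \<delta> g \<eta> and I :: "(real^'k) \<times> (real^'k) \<Rightarrow> complex^'k"
  assume a: "0 < \<delta> \<and> \<delta> < 1 / (4 * real CARD('k)) \<and> admissible_g \<delta> g \<and> admissible_lift \<eta> I"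
  obtain p \<epsilon>0 L where \<epsilon>0: "\<epsilon>0 > 0" and P: "\<And>\<epsilon>. 0 < \<epsilon> \<Longrightarrow> \<epsilon> < \<epsilon>0 \<Longrightarrow>
     continuous_on sphereS (p \<epsilon>) \<and> p \<epsilon> ` sphereS \<subseteq> bdZn \<and> (\<forall>x\<in>sphereS. p \<epsilon> x \<bullet> x \<le> 0) \<and>
     (\<forall>x\<in>sphereS. tor_dist (ArgV (Lift_L I g \<epsilon> x)) (pi *\<^sub>R p \<epsilon> x) \<le> L * \<epsilon>)"
    using main_est[OF assms, of \<delta> g \<eta> I] a by metis
  have Sne: "(sphereS::(real^'k) set) \<noteq> {}" by (rule sphereS_nonempty[OF assms])
  have heq: "homotopy_equivalence_map (top_of_set sphereS) (top_of_set bdZn) (p \<epsilon>)"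
    if "0 < \<epsilon> \<and> \<epsilon> < \<epsilon>0" for \<epsilon>
    using P[of \<epsilon>] that by (intro heq_from_neg) auto
  define F where "F \<epsilon> = (SUP x\<in>sphereS. tor_dist (ArgV (Lift_L I g \<epsilon> x)) (pi *\<^sub>R p \<epsilon> x))" for \<epsilon>
  have Fb: "0 \<le> F \<epsilon> \<and> F \<epsilon> \<le> L * \<epsilon>" if "0 < \<epsilon>" "\<epsilon> < \<epsilon>0" for \<epsilon>
  proof -
    have up: "\<And>x. x \<in> sphereS \<Longrightarrow> tor_dist (ArgV (Lift_L I g \<epsilon> x)) (pi *\<^sub>R p \<epsilon> x) \<le> L * \<epsilon>"
      using P[OF that] by blast
    have "F \<epsilon> \<le> L * \<epsilon>" unfolding F_def by (rule cSUP_least[OF Sne up])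
    moreover have "0 \<le> F \<epsilon>"
    proof -
      obtain x0 where x0: "x0 \<in> (sphereS::(real^'k) set)" using Sne by blast
      have "bdd_above ((\<lambda>x. tor_dist (ArgV (Lift_L I g \<epsilon> x)) (pi *\<^sub>R p \<epsilon> x)) ` sphereS)"
        using up by (intro bdd_aboveI[of _ "L * \<epsilon>"]) auto
      then have "tor_dist (ArgV (Lift_L I g \<epsilon> x0)) (pi *\<^sub>R p \<epsilon> x0) \<le> F \<epsilon>"
        unfolding F_def by (rule cSUP_upper[OF x0])
      then show ?thesis using tor_dist_nonneg order_trans by blast
    qed
    ultimately show ?thesis by simp
  qed
  have ev: "eventually (\<lambda>\<epsilon>. \<epsilon> \<in> {0<..<\<epsilon>0}) (at_right (0::real))"
    by (rule eventually_at_right_real[OF \<epsilon>0])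
  have "(F \<longlongrightarrow> 0) (at_right 0)"
  proof (rule tendsto_sandwich[where f="\<lambda>_. 0" and h="\<lambda>\<epsilon>. L * \<epsilon>"])
    show "\<forall>\<^sub>F n in at_right 0. 0 \<le> F n" using ev by eventually_elim (use Fb in auto)
    show "\<forall>\<^sub>F n in at_right 0. F n \<le> L * n" using ev by eventually_elim (use Fb in auto)
    show "((\<lambda>_. 0::real) \<longlongrightarrow> 0) (at_right 0)" by simp
    have "((\<lambda>\<epsilon>::real. L * \<epsilon>) \<longlongrightarrow> L * 0) (at_right 0)"
      by (intro tendsto_intros tendsto_ident_at)
    then show "((\<lambda>\<epsilon>. L * \<epsilon>) \<longlongrightarrow> 0) (at_right 0)" by simp
  qed
  then show "\<exists>p :: real \<Rightarrow> real^'k \<Rightarrow> real^'k. \<exists>\<epsilon>0>0.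
              (\<forall>\<epsilon>. 0 < \<epsilon> \<and> \<epsilon> < \<epsilon>0 \<longrightarrow>
                 homotopy_equivalence_map (top_of_set sphereS) (top_of_set bdZn) (p \<epsilon>)) \<and>
              ((\<lambda>\<epsilon>. SUP x\<in>sphereS. tor_dist (ArgV (Lift_L I g \<epsilon> x)) (pi *\<^sub>R p \<epsilon> x))
                 \<longlongrightarrow> 0) (at_right 0)"
    unfolding F_def[abs_def] using heq \<epsilon>0 by blast
qed


end
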